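(* Let $H\in M_d$ be a Hamiltonian, $\beta>0$, $\epsilon>0$, and let $\{e_1,\dots,e_{d'}\}\subset\mathbb R$ be an $\epsilon$-spectral covering of $H$. For $i\in[d']$ let $\tilde P_i$ be the orthogonal projection onto the span of the eigenvectors of $H$ with eigenvalues in $(e_i-\epsilon,e_i+\epsilon)$, and let $n_i=\operatorname{tr}\tilde P_i$. Define $$\tilde{\mathcal Z}_\beta=\sum_{i=1}^{d'}n_i e^{-\beta e_i},\qquad \tilde\rho=\frac{1}{\tilde{\mathcal Z}_\beta}\sum_{i=1}^{d'}e^{-\beta e_i}\tilde P_i .$$ Then $$\Big\|\tilde\rho-\frac{e^{-\beta H}}{\mathcal Z_\beta}\Big\|_1\le\sqrt{4\epsilon\beta}.$$ Consequently, for any POVM $\{F_k\}_{k\in I}$, the distributions $p(k)=\operatorname{tr}(F_k e^{-\beta H}/\mathcal Z_\beta)$ and $\tilde p(k)=\operatorname{tr}(F_k\tilde\rho)$ satisfy $\|\tilde p-p\|_1=\sum_k|\tilde p(k)-p(k)|\le\sqrt{4\epsilon\beta}$.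
   Context: $\mathcal Z_\beta=\operatorname{tr}[e^{-\beta H}]$. For $\epsilon>0$, a set $\{e_1,\dots,e_{d'}\}\subset\mathbb R$ is an $\epsilon$-spectral covering of a Hamiltonian (Hermitian matrix) $H$ if the spectrum $\sigma(H)$ is contained in the disjoint union $\bigsqcup_{i=1}^{d'}(e_i-\epsilon,e_i+\epsilon)$ (the intervals being pairwise disjoint) and $\sigma(H)\cap(e_i-\epsilon,e_i+\epsilon)\neq\emptyset$ for each $i$. $\|X\|_1=\operatorname{tr}|X|$ is the trace norm. A POVM is a family of positive semidefinite matrices $\{F_k\}_{k\in I}$ with $\sum_k F_k=\mathbf 1$. *)

theory Defs
  imports "HOL-Analysis.Analysis" "Jordan_Normal_Form.Matrix" "Jordan_Normal_Form.Char_Poly"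
begin

definition adj :: "complex mat \<Rightarrow> complex mat" where
  "adj A = mat (dim_col A) (dim_row A) (\<lambda>(i,j). cnj (A $$ (j,i)))"

definition hermitian :: "nat \<Rightarrow> complex mat \<Rightarrow> bool" where
  "hermitian d A \<longleftrightarrow> A \<in> carrier_mat d d \<and> adj A = A"

definition psd :: "nat \<Rightarrow> complex mat \<Rightarrow> bool" where
  "psd d A \<longleftrightarrow> hermitian d A \<and> (\<forall>v \<in> carrier_vec d. 0 \<le> Re ((A *\<^sub>v v) \<bullet>c v))"

definition tr :: "complex mat \<Rightarrow> complex" where
  "tr A = (\<Sum>i<dim_row A. A $$ (i,i))"

definition mat_exp :: "complex mat \<Rightarrow> complex mat" where
  "mat_exp A = mat (dim_row A) (dim_col A)
     (\<lambda>(i,j). \<Sum>k. (A ^\<^sub>m k) $$ (i,j) / of_nat (fact k))"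

definition spectrum :: "complex mat \<Rightarrow> complex set" where
  "spectrum A = {x. eigenvalue A x}"

definition vspan :: "nat \<Rightarrow> complex vec set \<Rightarrow> complex vec set" where
  "vspan d S = {v. \<exists>xs cs. set xs \<subseteq> S \<and> length cs = length xs \<and>
       v = foldr (+) (map2 (\<lambda>c x. c \<cdot>\<^sub>v x) cs xs) (0\<^sub>v d)}"

definition msum :: "nat \<Rightarrow> ('i \<Rightarrow> complex mat) \<Rightarrow> 'i set \<Rightarrow> complex mat" where
  "msum d f A = mat d d (\<lambda>(a,b). \<Sum>i\<in>A. f i $$ (a,b))"

definition orth_proj :: "nat \<Rightarrow> complex vec set \<Rightarrow> complex mat" where
  "orth_proj d W = (THE P. hermitian d P \<and> P * P = P \<and>
       (\<forall>v \<in> carrier_vec d. P *\<^sub>v v = v \<longleftrightarrow> v \<in> W))"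

definition mat_abs :: "complex mat \<Rightarrow> complex mat" where
  "mat_abs X = (THE S. psd (dim_col X) S \<and> S * S = adj X * X)"

definition trace_norm :: "complex mat \<Rightarrow> real" where
  "trace_norm X = Re (tr (mat_abs X))"

definition spectral_covering :: "real \<Rightarrow> complex mat \<Rightarrow> nat \<Rightarrow> (nat \<Rightarrow> real) \<Rightarrow> bool" where
  "spectral_covering \<epsilon> H d' e \<longleftrightarrow>
     spectrum H \<subseteq> (\<Union>i<d'. complex_of_real ` {e i - \<epsilon> <..< e i + \<epsilon>}) \<and>
     (\<forall>i<d'. \<forall>j<d'. i \<noteq> j \<longrightarrow> {e i - \<epsilon> <..< e i + \<epsilon>} \<inter> {e j - \<epsilon> <..< e j + \<epsilon>} = {}) \<and>
     (\<forall>i<d'. spectrum H \<inter> complex_of_real ` {e i - \<epsilon> <..< e i + \<epsilon>} \<noteq> {})"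

definition povm :: "nat \<Rightarrow> 'k set \<Rightarrow> ('k \<Rightarrow> complex mat) \<Rightarrow> bool" where
  "povm d I F \<longleftrightarrow> (\<forall>k\<in>I. psd d (F k)) \<and>
     (\<forall>i<d. \<forall>j<d. ((\<lambda>k. F k $$ (i,j)) has_sum (1\<^sub>m d $$ (i,j))) I)"

definition cov_proj :: "nat \<Rightarrow> complex mat \<Rightarrow> real \<Rightarrow> real \<Rightarrow> complex mat" where
  "cov_proj d H \<epsilon> c = orth_proj d (vspan d {v. \<exists>x\<in>{c - \<epsilon> <..< c + \<epsilon>}.
                                  eigenvector H v (complex_of_real x)})"

definition partition_fn :: "real \<Rightarrow> complex mat \<Rightarrow> complex" where
  "partition_fn \<beta> H = tr (mat_exp (complex_of_real (- \<beta>) \<cdot>\<^sub>m H))"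

definition gibbs :: "real \<Rightarrow> complex mat \<Rightarrow> complex mat" where
  "gibbs \<beta> H = (1 / partition_fn \<beta> H) \<cdot>\<^sub>m mat_exp (complex_of_real (- \<beta>) \<cdot>\<^sub>m H)"

definition approx_partition_fn :: "nat \<Rightarrow> complex mat \<Rightarrow> real \<Rightarrow> real \<Rightarrow> nat \<Rightarrow> (nat \<Rightarrow> real) \<Rightarrow> complex" where
  "approx_partition_fn d H \<beta> \<epsilon> d' e =
     (\<Sum>i<d'. tr (cov_proj d H \<epsilon> (e i)) * complex_of_real (exp (- \<beta> * e i)))"

definition approx_state :: "nat \<Rightarrow> complex mat \<Rightarrow> real \<Rightarrow> real \<Rightarrow> nat \<Rightarrow> (nat \<Rightarrow> real) \<Rightarrow> complex mat" where
  "approx_state d H \<beta> \<epsilon> d' e = (1 / approx_partition_fn d H \<beta> \<epsilon> d' e) \<cdot>\<^sub>m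
     msum d (\<lambda>i. complex_of_real (exp (- \<beta> * e i)) \<cdot>\<^sub>m cov_proj d H \<epsilon> (e i)) {..<d'}"

end

theory Submission
  imports Defs "Jordan_Normal_Form.Schur_Decomposition"
begin

lemma adj_carrier[simp]: "dim_row (adj A) = dim_col A" "dim_col (adj A) = dim_row A"
  unfolding adj_def by simp_all

lemma adj_carrier_mat[simp]: "A \<in> carrier_mat r c \<Longrightarrow> adj A \<in> carrier_mat c r"
  unfolding carrier_mat_def by simp

lemma index_adj[simp]: "i < dim_col A \<Longrightarrow> j < dim_row A \<Longrightarrow> adj A $$ (i,j) = cnj (A $$ (j,i))"
  unfolding adj_def by (subst index_mat, auto)

lemma adj_adj[simp]: "adj (adj A) = A"
  by (rule eq_matI, auto)

lemma adj_mult: assumes "A \<in> carrier_mat r n" "B \<in> carrier_mat n c"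
  shows "adj (A * B) = adj B * adj A"
proof (rule eq_matI)
  fix i j assume ij: "i < dim_row (adj B * adj A)" "j < dim_col (adj B * adj A)"
  then have i: "i < c" and j: "j < r" using assms by auto
  have "adj (A * B) $$ (i,j) = cnj (\<Sum>l=0..<n. A $$ (j,l) * B $$ (l,i))"
    using assms i j by (simp add: scalar_prod_def)
  also have "\<dots> = (\<Sum>l=0..<n. cnj (B $$ (l,i)) * cnj (A $$ (j,l)))"
    by (simp add: mult.commute)
  also have "\<dots> = (adj B * adj A) $$ (i,j)"
    using assms i j by (simp add: scalar_prod_def)
  finally show "adj (A * B) $$ (i,j) = (adj B * adj A) $$ (i,j)" .
qed (insert assms, auto)

lemma adj_add: assumes "A \<in> carrier_mat r c" "B \<in> carrier_mat r c"
  shows "adj (A + B) = adj A + adj B"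
  by (rule eq_matI, insert assms, auto)

lemma adj_minus: assumes "A \<in> carrier_mat r c" "B \<in> carrier_mat r c"
  shows "adj (A - B) = adj A - adj B"
  by (rule eq_matI, insert assms, auto)

lemma adj_smult: "adj (k \<cdot>\<^sub>m A) = cnj k \<cdot>\<^sub>m adj A"
  by (rule eq_matI, auto)

lemma adj_one[simp]: "adj (1\<^sub>m n) = 1\<^sub>m n"
  by (rule eq_matI, auto)

definition unitary :: "nat \<Rightarrow> complex mat \<Rightarrow> bool" where
  "unitary n U \<longleftrightarrow> U \<in> carrier_mat n n \<and> adj U * U = 1\<^sub>m n \<and> U * adj U = 1\<^sub>m n"

lemma unitaryI: assumes "U \<in> carrier_mat n n" "adj U * U = 1\<^sub>m n" shows "unitary n U"
  using assms mat_mult_left_right_inverse[of "adj U" n U] unfolding unitary_def by auto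

lemma unitary_mult: assumes "unitary n U" "unitary n V" shows "unitary n (U * V)"
proof -
  have U: "U \<in> carrier_mat n n" "adj U * U = 1\<^sub>m n" and V: "V \<in> carrier_mat n n" "adj V * V = 1\<^sub>m n"
    using assms unfolding unitary_def by auto
  have "adj (U * V) * (U * V) = (adj V * adj U) * (U * V)"
    using U V by (simp add: adj_mult)
  also have "\<dots> = adj V * (adj U * (U * V))"
    using U V by (meson adj_carrier_mat assoc_mult_mat mult_carrier_mat)
  also have "adj U * (U * V) = (adj U * U) * V"
    using U V by (metis adj_carrier_mat assoc_mult_mat)
  also have "\<dots> = V" using U V by simp
  finally show ?thesis using U V by (intro unitaryI, auto)
qed

lemma unitary_entries: assumes "U \<in> carrier_mat n n"
  shows "adj U * U = 1\<^sub>m n \<longleftrightarrow> (\<forall>i<n. \<forall>j<n. (\<Sum>l=0..<n. cnj (U $$ (l,i)) * U $$ (l,j)) = (if i = j then 1 else 0))"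
proof -
  have "(adj U * U) $$ (i,j) = (\<Sum>l=0..<n. cnj (U $$ (l,i)) * U $$ (l,j))" if "i < n" "j < n" for i j
    using assms that by (auto simp: scalar_prod_def)
  then show ?thesis using assms
    by (auto simp: mat_eq_iff)
qed

definition dmat :: "nat \<Rightarrow> (nat \<Rightarrow> complex) \<Rightarrow> complex mat" where
  "dmat n f = mat n n (\<lambda>(i,j). if i = j then f i else 0)"

lemma dmat_carrier[simp]: "dmat n f \<in> carrier_mat n n" "dim_row (dmat n f) = n" "dim_col (dmat n f) = n"
  by (auto simp: dmat_def)

lemma index_dmat[simp]: "i < n \<Longrightarrow> j < n \<Longrightarrow> dmat n f $$ (i,j) = (if i = j then f i else 0)"
  by (auto simp: dmat_def)

lemma mult_dmat_index: assumes "A \<in> carrier_mat m n" "i < m" "j < n"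
  shows "(A * dmat n f) $$ (i,j) = A $$ (i,j) * f j"
proof -
  have "(A * dmat n f) $$ (i,j) = (\<Sum>l=0..<n. A $$ (i,l) * (if l = j then f j else 0))"
    using assms by (auto simp: scalar_prod_def intro!: sum.cong)
  also have "\<dots> = A $$ (i,j) * f j" using assms(3) by (simp add: if_distrib sum.If_cases)
  finally show ?thesis .
qed

lemma sd_index: assumes "U \<in> carrier_mat n n" "i < n" "j < n"
  shows "(U * dmat n f * adj U) $$ (i,j) = (\<Sum>l=0..<n. U $$ (i,l) * f l * cnj (U $$ (j,l)))"
proof -
  have "(U * dmat n f * adj U) $$ (i,j) = (\<Sum>l=0..<n. (U * dmat n f) $$ (i,l) * adj U $$ (l,j))"
    using assms by (auto simp: scalar_prod_def)
  also have "\<dots> = (\<Sum>l=0..<n. U $$ (i,l) * f l * cnj (U $$ (j,l)))"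
  proof (rule sum.cong)
    fix l assume "l \<in> {0..<n}"
    then show "(U * dmat n f) $$ (i,l) * adj U $$ (l,j) = U $$ (i,l) * f l * cnj (U $$ (j,l))"
      using assms mult_dmat_index[OF assms(1), of i l f] by simp
  qed simp
  finally show ?thesis .
qed

lemma cscal_self: fixes w :: "complex vec"
  shows "w \<bullet>c w = of_real (\<Sum>l=0..<dim_vec w. (cmod (w $ l))\<^sup>2)"
  unfolding scalar_prod_def by (simp add: complex_mult_cnj cmod_def power2_eq_square)

lemma cscal_smult: fixes w u :: "complex vec" assumes "dim_vec w = dim_vec u"
  shows "(a \<cdot>\<^sub>v w) \<bullet>c (b \<cdot>\<^sub>v u) = a * cnj b * (w \<bullet>c u)"
  using assms unfolding scalar_prod_def by (simp add: sum_distrib_left algebra_simps)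

lemma unit_completion:
  fixes v :: "complex vec"
  assumes v: "v \<in> carrier_vec n" and v0: "v \<noteq> 0\<^sub>v n"
  shows "\<exists>W c. unitary n W \<and> col W 0 = c \<cdot>\<^sub>v v \<and> 0 < n"
proof -
  interpret cof_vec_space n "TYPE(complex)" .
  define b where "b = basis_completion v"
  from basis_completion[OF v v0, folded b_def]
  have dist_b: "distinct b" 
    and indep: "\<not> lin_dep (set b)" and b: "set b \<subseteq> carrier_vec n" and hdb: "hd b = v" 
    and len_b: "length b = n" by auto
  have n: "0 < n" using v v0 by (cases n, auto)
  from hdb len_b n obtain vs where bv: "b = v # vs" by (cases b, auto)
  define ws where "ws = gram_schmidt n b"
  from gram_schmidt_result[OF b dist_b indep ws_def]
  have ws: "set ws \<subseteq> carrier_vec n" "corthogonal ws" "length ws = n" 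
    by (auto simp: len_b)
  from gram_schmidt_hd[OF v, of vs, folded bv] have hdws: "hd ws = v" unfolding ws_def .
  define nr where "nr = (\<lambda>w :: complex vec. sqrt (\<Sum>l=0..<n. (cmod (w $ l))\<^sup>2))"
  define ws' where "ws' = map (\<lambda>w. complex_of_real (1 / nr w) \<cdot>\<^sub>v w) ws"
  define W where "W = mat_of_cols n ws'"
  have wsc: "\<And>i. i < n \<Longrightarrow> ws ! i \<in> carrier_vec n" using ws by auto
  have ws'c: "\<And>i. i < n \<Longrightarrow> ws' ! i \<in> carrier_vec n" using wsc ws(3) by (auto simp: ws'_def)
  have len': "length ws' = n" using ws(3) by (simp add: ws'_def)
  have W: "W \<in> carrier_mat n n" using len' ws'c unfolding W_def by auto
  have nr_pos: "nr (ws ! i) > 0" if i: "i < n" for i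
  proof -
    have "ws ! i \<bullet>c ws ! i \<noteq> 0" using corthogonalD[OF ws(2), of i i] i ws(3) by auto
    moreover have "ws ! i \<bullet>c ws ! i = of_real (\<Sum>l=0..<n. (cmod (ws ! i $ l))\<^sup>2)"
      using cscal_self[of "ws ! i"] wsc[OF i] by (simp del: of_real_sum of_real_power)
    ultimately have "(\<Sum>l=0..<n. (cmod (ws ! i $ l))\<^sup>2) \<noteq> 0" by (metis of_real_0)
    moreover have "(\<Sum>l=0..<n. (cmod (ws ! i $ l))\<^sup>2) \<ge> 0" by (intro sum_nonneg, auto)
    ultimately show ?thesis unfolding nr_def by auto
  qed
  have inner: "ws' ! j \<bullet>c ws' ! i = (if i = j then 1 else 0)" if i: "i < n" and j: "j < n" for i j
  proof -
    have eq: "ws' ! j \<bullet>c ws' ! i = complex_of_real (1 / nr (ws ! j)) * cnj (complex_of_real (1 / nr (ws ! i))) * (ws ! j \<bullet>c ws ! i)"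
    proof -
      have "ws' ! j = complex_of_real (1 / nr (ws ! j)) \<cdot>\<^sub>v ws ! j" "ws' ! i = complex_of_real (1 / nr (ws ! i)) \<cdot>\<^sub>v ws ! i"
        unfolding ws'_def using i j ws(3) by auto
      note e = this
      have d: "dim_vec (ws ! j) = dim_vec (ws ! i)" using wsc[OF i] wsc[OF j] by simp
      show ?thesis unfolding e by (rule cscal_smult[OF d])
    qed
    show ?thesis
    proof (cases "i = j")
      case True
      have s: "ws ! i \<bullet>c ws ! i = of_real ((nr (ws ! i))\<^sup>2)"
        using cscal_self[of "ws ! i"] wsc[OF i] unfolding nr_def
        by (simp add: sum_nonneg)
      show ?thesis using True eq s nr_pos[OF i]
        by (simp add: power2_eq_square field_simps)
    next
      case False
      then have "ws ! j \<bullet>c ws ! i = 0" using corthogonalD[OF ws(2), of j i] i j ws(3) by auto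
      then show ?thesis using eq False by simp
    qed
  qed
  have "adj W * W = 1\<^sub>m n"
  proof (rule eq_matI)
    fix i j assume "i < dim_row (1\<^sub>m n)" "j < dim_col (1\<^sub>m n)"
    then have i: "i < n" and j: "j < n" by auto
    have "(adj W * W) $$ (i,j) = (\<Sum>l=0..<n. cnj (W $$ (l,i)) * W $$ (l,j))"
      using W i j by (simp add: scalar_prod_def)
    also have "\<dots> = ws' ! j \<bullet>c ws' ! i"
      unfolding scalar_prod_def W_def using i j len' ws'c[OF i] ws'c[OF j]
      by (auto simp: mat_of_cols_index mult.commute intro!: sum.cong)
    also have "\<dots> = 1\<^sub>m n $$ (i,j)" using inner[OF i j] i j by simp
    finally show "(adj W * W) $$ (i,j) = 1\<^sub>m n $$ (i,j)" .
  qed (insert W, auto)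
  then have U: "unitary n W" using W by (intro unitaryI)
  have "col W 0 = ws' ! 0" unfolding W_def using n len' ws'c[OF n] by simp
  also have "\<dots> = complex_of_real (1 / nr v) \<cdot>\<^sub>v v"
  proof -
    have "ws ! 0 = v" using hdws n ws(3) by (metis hd_conv_nth length_greater_0_conv)
    then show ?thesis unfolding ws'_def using n ws(3) by simp
  qed
  finally show ?thesis using U n by blast
qed

lemma exists_eigenvector:
  assumes A: "(A :: complex mat) \<in> carrier_mat n n" and n: "0 < n"
  shows "\<exists>v \<mu>. eigenvector A v \<mu>"
proof -
  obtain as where cp: "char_poly A = (\<Prod>a\<leftarrow>as. [:- a, 1:])" and len: "length as = n"
    using char_poly_factorized[OF A] by auto
  then obtain a rest where as: "as = a # rest" using n by (cases as, auto)
  have "poly (char_poly A) a = 0" unfolding cp as by simp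
  then have "eigenvalue A a" using eigenvalue_root_char_poly[OF A] by simp
  then show ?thesis unfolding eigenvalue_def by auto
qed

lemma mat_eq_0: "A \<in> carrier_mat 0 0 \<Longrightarrow> B \<in> carrier_mat 0 0 \<Longrightarrow> A = B"
  by (rule eq_matI, auto)

lemma assoc4: assumes "X \<in> carrier_mat n n" "Y \<in> carrier_mat n n" "Z \<in> carrier_mat n n" "T \<in> carrier_mat n n" "V \<in> carrier_mat n n"
  shows "X * (Y * Z * T) * V = (X * Y) * Z * (T * V)"
  using assms by (simp add: assoc_mult_mat[of _ n n _ n _ n])

theorem spectral:
  assumes "hermitian n A"
  shows "\<exists>U f. unitary n U \<and> A = U * dmat n (\<lambda>j. complex_of_real (f j)) * adj U"
  using assms
proof (induction n arbitrary: A)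
  case 0
  then have A: "A \<in> carrier_mat 0 0" unfolding hermitian_def by auto
  have "unitary 0 (1\<^sub>m 0)" by (intro unitaryI, auto)
  moreover have "A = 1\<^sub>m 0 * dmat 0 (\<lambda>j. complex_of_real (f j)) * adj (1\<^sub>m 0)" for f
    by (rule mat_eq_0[OF A], auto)
  ultimately show ?case by blast
next
  case (Suc k A)
  define m where "m = Suc k"
  have A: "A \<in> carrier_mat m m" and hA: "adj A = A" using Suc(2) unfolding hermitian_def m_def by auto
  obtain v \<mu> where ev: "eigenvector A v \<mu>" using exists_eigenvector[OF A] unfolding m_def by auto
  then have v: "v \<in> carrier_vec m" and v0: "v \<noteq> 0\<^sub>v m" and Av: "A *\<^sub>v v = \<mu> \<cdot>\<^sub>v v"
    using A unfolding eigenvector_def by auto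
  obtain W c where uW: "unitary m W" and cW: "col W 0 = c \<cdot>\<^sub>v v"
    using unit_completion[OF v v0] by auto
  have W: "W \<in> carrier_mat m m" and WW: "adj W * W = 1\<^sub>m m" and WW': "W * adj W = 1\<^sub>m m"
    using uW unfolding unitary_def by auto
  have Au: "A *\<^sub>v col W 0 = \<mu> \<cdot>\<^sub>v col W 0"
    unfolding cW using mult_mat_vec[OF A v] Av by (simp add: smult_smult_assoc mult.commute)
  define A' where "A' = adj W * A * W"
  have A': "A' \<in> carrier_mat m m" unfolding A'_def using A W by auto
  have m0: "0 < m" unfolding m_def by auto
  have "col A' 0 = (adj W * A) *\<^sub>v col W 0" unfolding A'_def
    using A W m0 by (subst col_mult2[of _ m m], auto)
  also have "\<dots> = adj W *\<^sub>v (A *\<^sub>v col W 0)" using A W by (subst assoc_mult_mat_vec, auto)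
  also have "\<dots> = \<mu> \<cdot>\<^sub>v (adj W *\<^sub>v col W 0)" unfolding Au using W m0
    by (subst mult_mat_vec[of _ m m], auto)
  also have "adj W *\<^sub>v col W 0 = col (adj W * W) 0" using W m0 by (subst col_mult2[of _ m m], auto)
  also have "\<dots> = unit_vec m 0" unfolding WW using m0 by simp
  finally have colA': "col A' 0 = \<mu> \<cdot>\<^sub>v unit_vec m 0" .
  have A'i0: "A' $$ (i,0) = (if i = 0 then \<mu> else 0)" if "i < m" for i
  proof -
    have "A' $$ (i,0) = col A' 0 $ i" using A' that m0 by simp
    then show ?thesis unfolding colA' using that by (simp add: unit_vec_def)
  qed
  have hA': "adj A' = A'"
  proof -
    have "adj A' = adj W * adj (adj W * A)" unfolding A'_def using A W by (subst adj_mult[of _ m m _ m], auto)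
    also have "adj (adj W * A) = adj A * W" using A W by (subst adj_mult[of _ m m _ m], auto)
    finally show ?thesis unfolding A'_def hA using A W by (simp add: assoc_mult_mat[of _ m m _ m _ m])
  qed
  have A'sym: "A' $$ (i,j) = cnj (A' $$ (j,i))" if "i < m" "j < m" for i j
  proof -
    have "A' $$ (i,j) = adj A' $$ (i,j)" using hA' by simp
    also have "\<dots> = cnj (A' $$ (j,i))" using A' that by simp
    finally show ?thesis .
  qed
  have A'0j: "A' $$ (0,j) = (if j = 0 then \<mu> else 0)" if "j < m" for j
  proof -
    have "A' $$ (0,j) = cnj (A' $$ (j,0))" using A'sym[OF m0 that] .
    also have "\<dots> = (if j = 0 then cnj \<mu> else 0)" using A'i0[OF that] by simp
    finally have "A' $$ (0,j) = (if j = 0 then cnj \<mu> else 0)" .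
    moreover have "cnj \<mu> = \<mu>" using A'sym[OF m0 m0] A'i0[OF m0] by simp
    ultimately show ?thesis by simp
  qed
  have mureal: "cnj \<mu> = \<mu>" using A'sym[OF m0 m0] A'i0[OF m0] by simp
  then have mu: "\<mu> = complex_of_real (Re \<mu>)" proof -
    have "- Im \<mu> = Im \<mu>" using arg_cong[OF mureal, of Im] by simp
    then show ?thesis by (simp add: complex_eq_iff)
  qed
  define A3 where "A3 = mat k k (\<lambda>(i,j). A' $$ (Suc i, Suc j))"
  have A3: "A3 \<in> carrier_mat k k" unfolding A3_def by simp
  have "adj A3 = A3"
  proof (rule eq_matI)
    fix i j assume "i < dim_row A3" "j < dim_col A3"
    then have i: "i < k" and j: "j < k" using A3 by auto
    show "adj A3 $$ (i,j) = A3 $$ (i,j)" using i j A3 A'sym[of "Suc i" "Suc j"]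
      unfolding A3_def m_def by simp
  qed (insert A3, auto)
  then have "hermitian k A3" using A3 unfolding hermitian_def by simp
  from Suc(1)[OF this] obtain U3 f3 where uU3: "unitary k U3"
    and A3eq: "A3 = U3 * dmat k (\<lambda>j. complex_of_real (f3 j)) * adj U3" by blast
  have U3: "U3 \<in> carrier_mat k k" and U3u: "adj U3 * U3 = 1\<^sub>m k" using uU3 unfolding unitary_def by auto
  define B where "B = mat m m (\<lambda>(i,j). if i = 0 \<and> j = 0 then 1 else if i = 0 \<or> j = 0 then 0 else U3 $$ (i - 1, j - 1))"
  have B: "B \<in> carrier_mat m m" unfolding B_def by simp
  have B00: "B $$ (0,0) = 1" using m0 unfolding B_def by simp
  have B0S: "B $$ (0, Suc j) = 0" "B $$ (Suc j, 0) = 0" if "j < k" for j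
    using that unfolding B_def m_def by auto
  have BSS: "B $$ (Suc i, Suc j) = U3 $$ (i,j)" if "i < k" "j < k" for i j
    using that unfolding B_def m_def by auto
  have U3e: "(\<Sum>l=0..<k. cnj (U3 $$ (l,i)) * U3 $$ (l,j)) = (if i = j then 1 else 0)" if "i < k" "j < k" for i j
    using unitary_entries[OF U3] U3u that by auto
  have "adj B * B = 1\<^sub>m m"
  proof -
    have "(\<Sum>l=0..<m. cnj (B $$ (l,i)) * B $$ (l,j)) = (if i = j then 1 else 0)" if i: "i < m" and j: "j < m" for i j
    proof -
      have "(\<Sum>l=0..<m. cnj (B $$ (l,i)) * B $$ (l,j)) = cnj (B $$ (0,i)) * B $$ (0,j) + (\<Sum>l=0..<k. cnj (B $$ (Suc l,i)) * B $$ (Suc l,j))"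
        unfolding m_def by (subst sum.atLeast0_lessThan_Suc_shift, simp)
      also have "\<dots> = (if i = j then 1 else 0)"
      proof (cases i)
        case 0
        then show ?thesis
        proof (cases j)
          case 0 then show ?thesis using \<open>i = 0\<close> B00 B0S by simp
        next
          case (Suc j') then show ?thesis using \<open>i = 0\<close> B00 B0S j unfolding m_def by simp
        qed
      next
        case (Suc i')
        then show ?thesis
        proof (cases j)
          case 0 then show ?thesis using \<open>i = Suc i'\<close> B00 B0S i unfolding m_def by simp
        next
          case (Suc j') then show ?thesis using \<open>i = Suc i'\<close> B0S BSS U3e[of i' j'] i j unfolding m_def by simp
        qed
      qed
      finally show ?thesis .
    qed
    then show ?thesis using unitary_entries[OF B] by auto
  qed
  then have uB: "unitary m B" using B by (intro unitaryI)
  define f where "f = (\<lambda>l. if l = 0 then Re \<mu> else f3 (l - 1))"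
  define D where "D = dmat m (\<lambda>j. complex_of_real (f j))"
  have A'eq: "A' = B * D * adj B"
  proof (rule eq_matI)
    fix i j assume "i < dim_row (B * D * adj B)" "j < dim_col (B * D * adj B)"
    then have i: "i < m" and j: "j < m" using B by (auto simp: D_def)
    have "(B * D * adj B) $$ (i,j) = (\<Sum>l=0..<m. B $$ (i,l) * complex_of_real (f l) * cnj (B $$ (j,l)))"
      unfolding D_def using sd_index[OF B i j] .
    also have "\<dots> = B $$ (i,0) * complex_of_real (f 0) * cnj (B $$ (j,0)) + (\<Sum>l=0..<k. B $$ (i,Suc l) * complex_of_real (f3 l) * cnj (B $$ (j,Suc l)))"
      unfolding m_def by (subst sum.atLeast0_lessThan_Suc_shift, simp add: f_def)
    also have "\<dots> = A' $$ (i,j)"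
    proof (cases i)
      case 0
      then show ?thesis
      proof (cases j)
        case 0 then show ?thesis using \<open>i = 0\<close> B00 B0S A'i0[OF m0] mu by (simp add: f_def)
      next
        case (Suc j') then show ?thesis using \<open>i = 0\<close> B00 B0S j A'0j[OF j] unfolding m_def by simp
      qed
    next
      case (Suc i')
      then show ?thesis
      proof (cases j)
        case 0 then show ?thesis using \<open>i = Suc i'\<close> B00 B0S i A'i0[OF i] unfolding m_def by simp
      next
        case (Suc j')
        have "A' $$ (i,j) = A3 $$ (i',j')" using \<open>i = Suc i'\<close> Suc i j unfolding A3_def m_def by simp
        also have "\<dots> = (\<Sum>l=0..<k. U3 $$ (i',l) * complex_of_real (f3 l) * cnj (U3 $$ (j',l)))"
          unfolding A3eq using sd_index[OF U3] i j \<open>i = Suc i'\<close> Suc unfolding m_def by simp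
        finally show ?thesis using \<open>i = Suc i'\<close> Suc B0S BSS i j unfolding m_def by simp
      qed
    qed
    finally show "A' $$ (i,j) = (B * D * adj B) $$ (i,j)" by simp
  qed (insert B A', auto simp: D_def)
  have D: "D \<in> carrier_mat m m" unfolding D_def by simp
  have "A = (W * adj W) * A * (W * adj W)" unfolding WW' using A by simp
  also have "\<dots> = W * A' * adj W" unfolding A'_def using A W
    by (simp add: assoc4[of _ m])
  also have "\<dots> = (W * B) * D * (adj B * adj W)" unfolding A'eq using W B D
    by (simp add: assoc4[of _ m])
  also have "adj B * adj W = adj (W * B)" using W B by (simp add: adj_mult[of _ m m _ m])
  finally have "A = (W * B) * D * adj (W * B)" .
  moreover have "unitary m (W * B)" using unitary_mult[OF uW uB] .
  ultimately show ?case unfolding D_def m_def by blast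
qed

lemma mult_carrier_sq[simp]: "A \<in> carrier_mat n n \<Longrightarrow> B \<in> carrier_mat n n \<Longrightarrow> A * B \<in> carrier_mat n n"
  by (rule mult_carrier_mat)

definition sd :: "nat \<Rightarrow> complex mat \<Rightarrow> (nat \<Rightarrow> complex) \<Rightarrow> complex mat" where
  "sd n U f = U * dmat n f * adj U"

lemma sd_carrier[simp]: "U \<in> carrier_mat n n \<Longrightarrow> sd n U f \<in> carrier_mat n n"
  unfolding sd_def by simp

lemma sd_dims[simp]: "U \<in> carrier_mat n n \<Longrightarrow> dim_row (sd n U f) = n"
  "U \<in> carrier_mat n n \<Longrightarrow> dim_col (sd n U f) = n"
  unfolding sd_def by auto

lemma sd_idx: "U \<in> carrier_mat n n \<Longrightarrow> i < n \<Longrightarrow> j < n \<Longrightarrow>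
  sd n U f $$ (i,j) = (\<Sum>l=0..<n. U $$ (i,l) * f l * cnj (U $$ (j,l)))"
  unfolding sd_def by (rule sd_index)

lemma sd_eqI: assumes "U \<in> carrier_mat n n" "(\<And>l. l < n \<Longrightarrow> f l = g l)" shows "sd n U f = sd n U g"
proof -
  have "dmat n f = dmat n g" using assms(2) by (intro eq_matI, auto)
  then show ?thesis unfolding sd_def by simp
qed

lemma sd_add: assumes "U \<in> carrier_mat n n"
  shows "sd n U f + sd n U g = sd n U (\<lambda>l. f l + g l)"
proof (rule eq_matI)
  fix i j assume "i < dim_row (sd n U (\<lambda>l. f l + g l))" "j < dim_col (sd n U (\<lambda>l. f l + g l))"
  then have i: "i < n" and j: "j < n" using assms by auto
  have si: "\<And>h a b. a < n \<Longrightarrow> b < n \<Longrightarrow> sd n U h $$ (a,b) = (\<Sum>l=0..<n. U $$ (a,l) * h l * cnj (U $$ (b,l)))"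
    using assms by (rule sd_idx)
  show "(sd n U f + sd n U g) $$ (i,j) = (sd n U (\<lambda>l. f l + g l)) $$ (i,j)"
  proof -
    have "(sd n U f + sd n U g) $$ (i,j) = sd n U f $$ (i,j) + sd n U g $$ (i,j)"
      by (rule index_add_mat) (use assms i j in auto)
    also have "\<dots> = sd n U (\<lambda>l. f l + g l) $$ (i,j)" unfolding si[OF i j] sum.distrib[symmetric]
      by (rule sum.cong) (simp_all add: algebra_simps)
    finally show ?thesis .
  qed
qed (use assms in auto)

lemma sd_minus: assumes "U \<in> carrier_mat n n"
  shows "sd n U f - sd n U g = sd n U (\<lambda>l. f l - g l)"
proof (rule eq_matI)
  fix i j assume "i < dim_row (sd n U (\<lambda>l. f l - g l))" "j < dim_col (sd n U (\<lambda>l. f l - g l))"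
  then have i: "i < n" and j: "j < n" using assms by auto
  have si: "\<And>h a b. a < n \<Longrightarrow> b < n \<Longrightarrow> sd n U h $$ (a,b) = (\<Sum>l=0..<n. U $$ (a,l) * h l * cnj (U $$ (b,l)))"
    using assms by (rule sd_idx)
  show "(sd n U f - sd n U g) $$ (i,j) = (sd n U (\<lambda>l. f l - g l)) $$ (i,j)"
  proof -
    have "(sd n U f - sd n U g) $$ (i,j) = sd n U f $$ (i,j) - sd n U g $$ (i,j)"
      by (rule index_minus_mat) (use assms i j in auto)
    also have "\<dots> = sd n U (\<lambda>l. f l - g l) $$ (i,j)" unfolding si[OF i j] sum_subtractf[symmetric]
      by (rule sum.cong) (simp_all add: algebra_simps)
    finally show ?thesis .
  qed
qed (use assms in auto)

lemma sd_smult: assumes "U \<in> carrier_mat n n"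
  shows "c \<cdot>\<^sub>m sd n U f = sd n U (\<lambda>l. c * f l)"
proof (rule eq_matI)
  fix i j assume "i < dim_row (sd n U (\<lambda>l. c * f l))" "j < dim_col (sd n U (\<lambda>l. c * f l))"
  then have i: "i < n" and j: "j < n" using assms by auto
  have si: "\<And>h a b. a < n \<Longrightarrow> b < n \<Longrightarrow> sd n U h $$ (a,b) = (\<Sum>l=0..<n. U $$ (a,l) * h l * cnj (U $$ (b,l)))"
    using assms by (rule sd_idx)
  show "(c \<cdot>\<^sub>m sd n U f) $$ (i,j) = (sd n U (\<lambda>l. c * f l)) $$ (i,j)"
  proof -
    have "(c \<cdot>\<^sub>m sd n U f) $$ (i,j) = c * sd n U f $$ (i,j)"
      by (rule index_smult_mat) (use assms i j in auto)
    also have "\<dots> = sd n U (\<lambda>l. c * f l) $$ (i,j)" unfolding si[OF i j] sum_distrib_left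
      by (rule sum.cong) (simp_all add: algebra_simps)
    finally show ?thesis .
  qed
qed (use assms in auto)

lemma adj_sd: assumes "U \<in> carrier_mat n n"
  shows "adj (sd n U f) = sd n U (\<lambda>l. cnj (f l))"
proof (rule eq_matI)
  fix i j assume "i < dim_row (sd n U (\<lambda>l. cnj (f l)))" "j < dim_col (sd n U (\<lambda>l. cnj (f l)))"
  then have i: "i < n" and j: "j < n" using assms by auto
  have si: "\<And>h a b. a < n \<Longrightarrow> b < n \<Longrightarrow> sd n U h $$ (a,b) = (\<Sum>l=0..<n. U $$ (a,l) * h l * cnj (U $$ (b,l)))"
    using assms by (rule sd_idx)
  show "(adj (sd n U f)) $$ (i,j) = (sd n U (\<lambda>l. cnj (f l))) $$ (i,j)"
  proof -
    have "adj (sd n U f) $$ (i,j) = cnj (sd n U f $$ (j,i))"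
      by (rule index_adj) (use assms i j in auto)
    also have "\<dots> = sd n U (\<lambda>l. cnj (f l)) $$ (i,j)" unfolding si[OF i j] si[OF j i] cnj_sum
      by (rule sum.cong) (simp_all add: algebra_simps)
    finally show ?thesis .
  qed
qed (use assms in auto)

lemma dmat_one: "dmat n (\<lambda>_. 1) = 1\<^sub>m n"
  by (rule eq_matI, auto)

lemma dmat_mult: "dmat n f * dmat n g = dmat n (\<lambda>l. f l * g l)"
proof (rule eq_matI)
  fix i j assume "i < dim_row (dmat n (\<lambda>l. f l * g l))" "j < dim_col (dmat n (\<lambda>l. f l * g l))"
  then have i: "i < n" and j: "j < n" by auto
  have "(dmat n f * dmat n g) $$ (i,j) = dmat n f $$ (i,j) * g j"
    using mult_dmat_index[of "dmat n f" n n i j g] i j by simp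
  then show "(dmat n f * dmat n g) $$ (i,j) = dmat n (\<lambda>l. f l * g l) $$ (i,j)" using i j by simp
qed auto

lemma sd_one: assumes "unitary n U" shows "sd n U (\<lambda>_. 1) = 1\<^sub>m n"
  using assms right_mult_one_mat[of U n n] unfolding sd_def unitary_def dmat_one by simp

lemma sd_mult: assumes "unitary n U"
  shows "sd n U f * sd n U g = sd n U (\<lambda>l. f l * g l)"
proof -
  have U: "U \<in> carrier_mat n n" and UU: "adj U * U = 1\<^sub>m n" using assms unfolding unitary_def by auto
  have "sd n U f * sd n U g = U * dmat n f * (adj U * U) * dmat n g * adj U"
    unfolding sd_def using U by (simp add: assoc_mult_mat[of _ n n _ n _ n])
  also have "\<dots> = U * (dmat n f * dmat n g) * adj U"
    unfolding UU using U by (simp add: assoc_mult_mat[of _ n n _ n _ n])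
  finally show ?thesis unfolding dmat_mult sd_def .
qed

lemma sd_pow: assumes "unitary n U"
  shows "sd n U f ^\<^sub>m k = sd n U (\<lambda>l. f l ^ k)"
proof (induction k)
  case 0
  have "U \<in> carrier_mat n n" using assms unfolding unitary_def by auto
  then show ?case using sd_one[OF assms] by simp
next
  case (Suc k)
  then show ?case using sd_mult[OF assms] by (simp add: mult.commute)
qed

lemma tr_sd: assumes "unitary n U"
  shows "tr (sd n U f) = (\<Sum>l=0..<n. f l)"
proof -
  have U: "U \<in> carrier_mat n n" and UU: "adj U * U = 1\<^sub>m n" using assms unfolding unitary_def by auto
  have col: "(\<Sum>i=0..<n. cnj (U $$ (i,l)) * U $$ (i,l)) = 1" if "l < n" for l
    using unitary_entries[OF U] UU that by auto
  have "tr (sd n U f) = (\<Sum>i<n. \<Sum>l=0..<n. U $$ (i,l) * f l * cnj (U $$ (i,l)))"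
    unfolding tr_def using U by (auto simp: sd_idx intro!: sum.cong)
  also have "\<dots> = (\<Sum>l=0..<n. f l * (\<Sum>i=0..<n. cnj (U $$ (i,l)) * U $$ (i,l)))"
    by (subst sum.swap, auto simp: sum_distrib_left lessThan_atLeast0 intro!: sum.cong)
  also have "\<dots> = (\<Sum>l=0..<n. f l)" using col by simp
  finally show ?thesis .
qed

lemma mat_exp_sd: assumes "unitary n U"
  shows "mat_exp (sd n U f) = sd n U (\<lambda>l. exp (f l))"
proof -
  have U: "U \<in> carrier_mat n n" using assms unfolding unitary_def by auto
  show ?thesis
  proof (rule eq_matI)
    fix i j assume "i < dim_row (sd n U (\<lambda>l. exp (f l)))" "j < dim_col (sd n U (\<lambda>l. exp (f l)))"
    then have i: "i < n" and j: "j < n" using U by auto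
    have eq: "(sd n U f ^\<^sub>m k) $$ (i,j) / of_nat (fact k) = (\<Sum>l=0..<n. (U $$ (i,l) * cnj (U $$ (j,l))) * (f l ^ k /\<^sub>R fact k))" for k
      unfolding sd_pow[OF assms] using U i j
      by (simp add: sd_idx sum_divide_distrib sum_distrib_left scaleR_conv_of_real divide_inverse algebra_simps)
    have "(\<lambda>k. (sd n U f ^\<^sub>m k) $$ (i,j) / of_nat (fact k)) sums (\<Sum>l=0..<n. (U $$ (i,l) * cnj (U $$ (j,l))) * exp (f l))"
      unfolding eq by (intro sums_sum sums_mult exp_converges)
    then have "(\<Sum>k. (sd n U f ^\<^sub>m k) $$ (i,j) / of_nat (fact k)) = (\<Sum>l=0..<n. U $$ (i,l) * exp (f l) * cnj (U $$ (j,l)))"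
      by (simp add: sums_iff algebra_simps)
    then show "mat_exp (sd n U f) $$ (i,j) = sd n U (\<lambda>l. exp (f l)) $$ (i,j)"
      unfolding mat_exp_def using U i j by (simp add: sd_idx)
  qed (insert U, auto simp: mat_exp_def)
qed

lemma sd_mult_col: assumes "unitary n U" "j < n"
  shows "sd n U f *\<^sub>v col U j = f j \<cdot>\<^sub>v col U j"
proof -
  have U: "U \<in> carrier_mat n n" and UU: "adj U * U = 1\<^sub>m n" using assms unfolding unitary_def by auto
  have "sd n U f * U = U * dmat n f"
    unfolding sd_def using U UU by (simp add: assoc_mult_mat[of _ n n _ n _ n])
  then have "sd n U f *\<^sub>v col U j = col (U * dmat n f) j"
    using U assms(2) by (metis col_mult2 sd_carrier)
  also have "\<dots> = f j \<cdot>\<^sub>v col U j"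
  proof (rule eq_vecI)
    fix i assume "i < dim_vec (f j \<cdot>\<^sub>v col U j)" then have i: "i < n" using U by simp
    have "col (U * dmat n f) j $ i = (U * dmat n f) $$ (i,j)"
      by (rule index_col) (use U i assms(2) in auto)
    also have "\<dots> = U $$ (i,j) * f j" by (rule mult_dmat_index[OF U i assms(2)])
    finally show "col (U * dmat n f) j $ i = (f j \<cdot>\<^sub>v col U j) $ i" using U i assms(2) by simp
  qed (use U in auto)
  finally show ?thesis .
qed

lemma dmat_mult_index: assumes "A \<in> carrier_mat n m" "i < n" "j < m"
  shows "(dmat n f * A) $$ (i,j) = f i * A $$ (i,j)"
proof -
  have "(dmat n f * A) $$ (i,j) = (\<Sum>l=0..<n. (if i = l then f i else 0) * A $$ (l,j))"
    using assms by (auto simp: scalar_prod_def intro!: sum.cong)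
  also have "\<dots> = (\<Sum>l=0..<n. if l = i then f i * A $$ (i,j) else 0)" by (rule sum.cong) auto
  also have "\<dots> = f i * A $$ (i,j)" using assms(2) by simp
  finally show ?thesis .
qed

lemma dmat_vec_index: assumes "w \<in> carrier_vec n" "i < n"
  shows "(dmat n f *\<^sub>v w) $ i = f i * w $ i"
proof -
  have "(dmat n f *\<^sub>v w) $ i = (\<Sum>l=0..<n. (if i = l then f i else 0) * w $ l)"
    using assms by (auto simp: scalar_prod_def intro!: sum.cong)
  also have "\<dots> = (\<Sum>l=0..<n. if l = i then f i * w $ i else 0)" by (rule sum.cong) auto
  also have "\<dots> = f i * w $ i" using assms(2) by simp
  finally show ?thesis .
qed

lemma sd_R: assumes "unitary n U" shows "sd n U h * U = U * dmat n h"
proof -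
  have U: "U \<in> carrier_mat n n" and UU: "adj U * U = 1\<^sub>m n" using assms unfolding unitary_def by auto
  have "sd n U h * U = U * dmat n h * (adj U * U)" unfolding sd_def using U
    by (simp add: assoc_mult_mat[of _ n n _ n _ n])
  then show ?thesis unfolding UU using U by simp
qed

lemma sd_L: assumes "unitary n U" shows "adj U * sd n U h = dmat n h * adj U"
proof -
  have U: "U \<in> carrier_mat n n" and UU: "U * adj U = 1\<^sub>m n" using assms unfolding unitary_def by auto
  have "adj U * sd n U h = (adj U * U) * dmat n h * adj U" unfolding sd_def using U
    by (simp add: assoc_mult_mat[of _ n n _ n _ n])
  then show ?thesis using assms U unfolding unitary_def by simp
qed

lemma cscal_adj: assumes "M \<in> carrier_mat n m" "y \<in> carrier_vec m" "v \<in> carrier_vec n"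
  shows "(M *\<^sub>v y) \<bullet>c v = y \<bullet>c (adj M *\<^sub>v v)"
proof -
  have "(M *\<^sub>v y) \<bullet>c v = (\<Sum>a=0..<n. \<Sum>b=0..<m. M $$ (a,b) * y $ b * cnj (v $ a))"
    using assms by (simp add: scalar_prod_def sum_distrib_right)
  also have "\<dots> = (\<Sum>b=0..<m. \<Sum>a=0..<n. M $$ (a,b) * y $ b * cnj (v $ a))"
    by (rule sum.swap)
  also have "\<dots> = y \<bullet>c (adj M *\<^sub>v v)"
    using assms by (simp add: scalar_prod_def sum_distrib_left mult.commute mult.left_commute)
  finally show ?thesis .
qed

lemma quadform_sd: assumes "unitary n U" "v \<in> carrier_vec n"
  shows "(sd n U f *\<^sub>v v) \<bullet>c v = (\<Sum>l=0..<n. f l * ((adj U *\<^sub>v v) $ l * cnj ((adj U *\<^sub>v v) $ l)))"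
proof -
  have U: "U \<in> carrier_mat n n" using assms unfolding unitary_def by auto
  define w where "w = adj U *\<^sub>v v"
  have w: "w \<in> carrier_vec n" unfolding w_def by (rule mult_mat_vec_carrier[of _ n n]) (use U assms in auto)
  have "sd n U f *\<^sub>v v = (U * dmat n f) *\<^sub>v w" unfolding sd_def w_def
    by (rule assoc_mult_mat_vec[of _ n n _ n]) (use U assms in auto)
  also have "\<dots> = U *\<^sub>v (dmat n f *\<^sub>v w)"
    by (rule assoc_mult_mat_vec[of _ n n _ n]) (use U w in auto)
  finally have "sd n U f *\<^sub>v v = U *\<^sub>v (dmat n f *\<^sub>v w)" .
  moreover have dw: "dmat n f *\<^sub>v w \<in> carrier_vec n" by (rule mult_mat_vec_carrier[of _ n n]) (use w in auto)
  ultimately have "(sd n U f *\<^sub>v v) \<bullet>c v = (dmat n f *\<^sub>v w) \<bullet>c w"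
    using cscal_adj[OF U dw assms(2)] unfolding w_def by simp
  also have "\<dots> = (\<Sum>l=0..<n. f l * (w $ l * cnj (w $ l)))"
    unfolding scalar_prod_def using w dmat_vec_index[OF w] by (intro sum.cong, auto simp del: index_mult_mat_vec simp: mult.assoc)
  finally show ?thesis unfolding w_def .
qed

lemma psd_sd: assumes "unitary n U" "\<And>l. l < n \<Longrightarrow> f l = complex_of_real (t l)" "\<And>l. l < n \<Longrightarrow> t l \<ge> 0"
  shows "psd n (sd n U f)"
proof -
  have U: "U \<in> carrier_mat n n" using assms unfolding unitary_def by auto
  have "adj (sd n U f) = sd n U f" unfolding adj_sd[OF U] by (rule sd_eqI[OF U], simp add: assms(2))
  then have h: "hermitian n (sd n U f)" unfolding hermitian_def using U by simp
  have "0 \<le> Re ((sd n U f *\<^sub>v v) \<bullet>c v)" if v: "v \<in> carrier_vec n" for v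
  proof -
    have "Re ((sd n U f *\<^sub>v v) \<bullet>c v) = (\<Sum>l=0..<n. t l * (cmod ((adj U *\<^sub>v v) $ l))\<^sup>2)"
      unfolding quadform_sd[OF assms(1) v] Re_sum
      by (rule sum.cong, simp, simp add: assms(2) complex_mult_cnj cmod_def)
    also have "\<dots> \<ge> 0" using assms(3) by (intro sum_nonneg, auto)
    finally show ?thesis by simp
  qed
  then show ?thesis unfolding psd_def using h by auto
qed

lemma psd_eig_nonneg: assumes "unitary n V" "psd n (sd n V (\<lambda>l. complex_of_real (s l)))" "i < n"
  shows "s i \<ge> 0"
proof -
  have V: "V \<in> carrier_mat n n" and VV: "adj V * V = 1\<^sub>m n" using assms unfolding unitary_def by auto
  have c: "col V i \<in> carrier_vec n" using V by auto
  have "(\<Sum>l=0..<n. cnj (V $$ (l,i)) * V $$ (l,i)) = 1" using unitary_entries[OF V] VV assms(3) by auto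
  then have nrm: "col V i \<bullet>c col V i = 1" using V assms(3) by (simp add: scalar_prod_def mult.commute)
  have "0 \<le> Re ((sd n V (\<lambda>l. complex_of_real (s l)) *\<^sub>v col V i) \<bullet>c col V i)"
    using assms(2) c unfolding psd_def by auto
  also have "(sd n V (\<lambda>l. complex_of_real (s l)) *\<^sub>v col V i) = complex_of_real (s i) \<cdot>\<^sub>v col V i"
    by (rule sd_mult_col[OF assms(1,3)])
  also have "(complex_of_real (s i) \<cdot>\<^sub>v col V i) \<bullet>c col V i = complex_of_real (s i) * (col V i \<bullet>c col V i)"
    using c by (simp add: scalar_prod_def sum_distrib_left mult.assoc)
  finally show ?thesis unfolding nrm by simp
qed

lemma asq: "A \<in> carrier_mat n n \<Longrightarrow> B \<in> carrier_mat n n \<Longrightarrow> C \<in> carrier_mat n n \<Longrightarrow> A * B * C = A * (B * C)"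
  by (rule assoc_mult_mat)

lemma sqrt_unique:
  assumes uU: "unitary n U" and S: "psd n S"
    and SS: "S * S = sd n U (\<lambda>l. complex_of_real (x l) * complex_of_real (x l))"
  shows "S = sd n U (\<lambda>l. complex_of_real \<bar>x l\<bar>)"
proof -
  have U: "U \<in> carrier_mat n n" and UU': "U * adj U = 1\<^sub>m n" using uU unfolding unitary_def by auto
  have hS: "hermitian n S" using S unfolding psd_def by auto
  obtain V s where uV: "unitary n V" and Seq: "S = V * dmat n (\<lambda>j. complex_of_real (s j)) * adj V"
    using spectral[OF hS] by blast
  have V: "V \<in> carrier_mat n n" and VV': "V * adj V = 1\<^sub>m n" using uV unfolding unitary_def by auto
  have Ssd: "S = sd n V (\<lambda>j. complex_of_real (s j))" unfolding sd_def Seq ..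
  have s0: "s i \<ge> 0" if "i < n" for i using psd_eig_nonneg[OF uV _ that] S unfolding Ssd by simp
  define M where "M = adj V * U"
  have M: "M \<in> carrier_mat n n" unfolding M_def using U V by simp
  define g where "g = (\<lambda>l. complex_of_real (s l) * complex_of_real (s l))"
  define h where "h = (\<lambda>l. complex_of_real (x l) * complex_of_real (x l))"
  have SS2: "S * S = sd n V g" unfolding Ssd sd_mult[OF uV] g_def ..
  have "adj V * (S * S) * U = dmat n g * M"
    unfolding SS2 sd_L[OF uV] M_def using U V by (simp add: asq[of _ n])
  moreover have "adj V * (S * S) * U = M * dmat n h"
    unfolding SS h_def[symmetric] M_def using U V
    by (simp add: asq[of _ n] sd_R[OF uU])
  ultimately have eq: "dmat n g * M = M * dmat n h" by simp
  have key: "dmat n (\<lambda>l. complex_of_real (s l)) * M = M * dmat n (\<lambda>l. complex_of_real \<bar>x l\<bar>)"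
  proof (rule eq_matI)
    fix i j assume "i < dim_row (M * dmat n (\<lambda>l. complex_of_real \<bar>x l\<bar>))" "j < dim_col (M * dmat n (\<lambda>l. complex_of_real \<bar>x l\<bar>))"
    then have i: "i < n" and j: "j < n" using M by auto
    have e: "g i * M $$ (i,j) = M $$ (i,j) * h j"
      using arg_cong[OF eq, of "\<lambda>A. A $$ (i,j)"] dmat_mult_index[OF M i j] mult_dmat_index[OF M i j] by simp
    have "complex_of_real (s i) * M $$ (i,j) = M $$ (i,j) * complex_of_real \<bar>x j\<bar>"
    proof (cases "M $$ (i,j) = 0")
      case False
      then have "g i = h j" using e by simp
      then have "s i * s i = x j * x j" unfolding g_def h_def by (metis of_real_eq_iff of_real_mult)
      then have "s i ^ 2 = x j ^ 2" by (simp add: power2_eq_square)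
      then have "s i = x j \<or> s i = - x j" unfolding power2_eq_iff .
      then have "s i = \<bar>x j\<bar>" using s0[OF i] by auto
      then show ?thesis by simp
    qed simp
    then show "(dmat n (\<lambda>l. complex_of_real (s l)) * M) $$ (i,j) = (M * dmat n (\<lambda>l. complex_of_real \<bar>x l\<bar>)) $$ (i,j)"
      using dmat_mult_index[OF M i j] mult_dmat_index[OF M i j] by simp
  qed (use M in auto)
  define T where "T = sd n U (\<lambda>l. complex_of_real \<bar>x l\<bar>)"
  have T: "T \<in> carrier_mat n n" unfolding T_def using U by simp
  have "S * U = V * (dmat n (\<lambda>l. complex_of_real (s l)) * M)"
    unfolding Seq M_def using U V by (simp add: asq[of _ n])
  also have "\<dots> = V * (M * dmat n (\<lambda>l. complex_of_real \<bar>x l\<bar>))"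
    by (simp only: key)
  also have "\<dots> = (V * adj V) * U * dmat n (\<lambda>l. complex_of_real \<bar>x l\<bar>)"
    unfolding M_def using U V by (simp add: asq[of _ n])
  also have "\<dots> = T * U" unfolding VV' T_def sd_R[OF uU] using U by simp
  finally have SU: "S * U = T * U" .
  have Sc: "S \<in> carrier_mat n n" using Seq V by simp
  have "S = S * (U * adj U)" unfolding UU' using Sc by simp
  also have "\<dots> = (S * U) * adj U" using Sc U by (simp add: asq[of _ n])
  also have "\<dots> = T" unfolding SU using T U UU' by (simp add: asq[of _ n])
  finally show ?thesis unfolding T_def .
qed

lemma trace_norm_sd:
  assumes uU: "unitary n U"
  shows "trace_norm (sd n U (\<lambda>l. complex_of_real (x l))) = (\<Sum>l=0..<n. \<bar>x l\<bar>)"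
proof -
  have U: "U \<in> carrier_mat n n" using uU unfolding unitary_def by auto
  define X where "X = sd n U (\<lambda>l. complex_of_real (x l))"
  define T where "T = sd n U (\<lambda>l. complex_of_real \<bar>x l\<bar>)"
  have aX: "adj X = X" unfolding X_def adj_sd[OF U] by (rule sd_eqI[OF U], simp)
  have XX: "adj X * X = sd n U (\<lambda>l. complex_of_real (x l) * complex_of_real (x l))"
  proof -
    have "adj X * X = X * X" by (simp only: aX)
    also have "X * X = sd n U (\<lambda>l. complex_of_real (x l) * complex_of_real (x l))"
      unfolding X_def by (rule sd_mult[OF uU])
    finally show ?thesis .
  qed
  have Tpsd: "psd n T" unfolding T_def by (rule psd_sd[OF uU], auto)
  have TT: "T * T = adj X * X" unfolding XX T_def sd_mult[OF uU]
    by (rule sd_eqI[OF U], simp flip: of_real_mult)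
  have dc: "dim_col X = n" unfolding X_def using U by simp
  have "mat_abs X = T"
    unfolding mat_abs_def dc
  proof (rule the_equality)
    show "psd n T \<and> T * T = adj X * X" using Tpsd TT by simp
    fix S assume "psd n S \<and> S * S = adj X * X"
    then show "S = T" unfolding T_def XX using sqrt_unique[OF uU] by blast
  qed
  then have "trace_norm X = Re (tr T)" unfolding trace_norm_def by simp
  also have "\<dots> = (\<Sum>l=0..<n. \<bar>x l\<bar>)" unfolding T_def tr_sd[OF uU] by simp
  finally show ?thesis unfolding X_def .
qed

lemma mult_mat_vec_zero: "A \<in> carrier_mat n m \<Longrightarrow> A *\<^sub>v 0\<^sub>v m = 0\<^sub>v n"
  by (intro eq_vecI, auto simp: scalar_prod_def)

lemma mat_eq_by_vec: assumes "A \<in> carrier_mat n n" "B \<in> carrier_mat n n"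
  "\<And>j. j < n \<Longrightarrow> col A j = col B j" shows "A = B"
proof (rule eq_matI)
  fix i j assume "i < dim_row B" "j < dim_col B"
  then have i: "i < n" and j: "j < n" using assms by auto
  have "A $$ (i,j) = col A j $ i" using index_col[of i A j] assms i j by auto
  also have "\<dots> = col B j $ i" using assms(3)[OF j] by simp
  also have "\<dots> = B $$ (i,j)" using index_col[of i B j] assms i j by auto
  finally show "A $$ (i,j) = B $$ (i,j)" .
qed (use assms in auto)

lemma proj_absorb: assumes P: "P \<in> carrier_mat n n" "P * P = P" and Q: "Q \<in> carrier_mat n n"
  and fx: "\<And>v. v \<in> carrier_vec n \<Longrightarrow> P *\<^sub>v v = v \<Longrightarrow> Q *\<^sub>v v = v"
  shows "Q * P = P"
proof (rule mat_eq_by_vec)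
  fix j assume j: "j < n"
  have c: "col P j \<in> carrier_vec n" using P by auto
  have "P *\<^sub>v col P j = col (P * P) j" using P j by (subst col_mult2[of _ n n], auto)
  then have "P *\<^sub>v col P j = col P j" using P by simp
  then have "Q *\<^sub>v col P j = col P j" using fx c by auto
  then show "col (Q * P) j = col P j" using P Q j by (subst col_mult2[of _ n n], auto)
qed (use P Q in auto)

lemma orth_proj_unique:
  assumes P: "hermitian n P" "P * P = P" and Q: "hermitian n Q" "Q * Q = Q"
    and eq: "\<And>v. v \<in> carrier_vec n \<Longrightarrow> P *\<^sub>v v = v \<longleftrightarrow> Q *\<^sub>v v = v"
  shows "P = Q"
proof -
  have Pc: "P \<in> carrier_mat n n" and aP: "adj P = P" using P unfolding hermitian_def by auto
  have Qc: "Q \<in> carrier_mat n n" and aQ: "adj Q = Q" using Q unfolding hermitian_def by auto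
  have QP: "Q * P = P" by (rule proj_absorb[OF Pc P(2) Qc]) (use eq in auto)
  have PQ: "P * Q = Q" by (rule proj_absorb[OF Qc Q(2) Pc]) (use eq in auto)
  have "P = adj (Q * P)" using QP aP by simp
  also have "\<dots> = adj P * adj Q" using Qc Pc by (rule adj_mult)
  also have "\<dots> = Q" unfolding aP aQ PQ ..
  finally show ?thesis .
qed

lemma sd_fix: assumes uU: "unitary n U" and v: "v \<in> carrier_vec n"
  shows "sd n U g *\<^sub>v v = v \<longleftrightarrow> dmat n g *\<^sub>v (adj U *\<^sub>v v) = adj U *\<^sub>v v"
proof -
  have U: "U \<in> carrier_mat n n" and UU: "adj U * U = 1\<^sub>m n" and UU': "U * adj U = 1\<^sub>m n"
    using uU unfolding unitary_def by auto
  define w where "w = adj U *\<^sub>v v"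
  have w: "w \<in> carrier_vec n" unfolding w_def by (rule mult_mat_vec_carrier[of _ n n]) (use U v in auto)
  have dw: "dmat n g *\<^sub>v w \<in> carrier_vec n" by (rule mult_mat_vec_carrier[of _ n n]) (use w in auto)
  have e1: "sd n U g *\<^sub>v v = U *\<^sub>v (dmat n g *\<^sub>v w)"
  proof -
    have "sd n U g *\<^sub>v v = (U * dmat n g) *\<^sub>v w" unfolding sd_def w_def
      by (rule assoc_mult_mat_vec[of _ n n _ n]) (use U v in auto)
    also have "\<dots> = U *\<^sub>v (dmat n g *\<^sub>v w)"
      by (rule assoc_mult_mat_vec[of _ n n _ n]) (use U w in auto)
    finally show ?thesis .
  qed
  have vw: "U *\<^sub>v w = v" unfolding w_def
    using assoc_mult_mat_vec[of U n n "adj U" n v] U v UU' by simp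
  have bk: "adj U *\<^sub>v (U *\<^sub>v y) = y" if "y \<in> carrier_vec n" for y
    using assoc_mult_mat_vec[of "adj U" n n U n y] U that UU by simp
  show ?thesis
  proof
    assume "sd n U g *\<^sub>v v = v"
    then have "U *\<^sub>v (dmat n g *\<^sub>v w) = v" using e1 by simp
    then have "adj U *\<^sub>v (U *\<^sub>v (dmat n g *\<^sub>v w)) = w" unfolding w_def by simp
    then show "dmat n g *\<^sub>v (adj U *\<^sub>v v) = adj U *\<^sub>v v" using bk[OF dw] unfolding w_def by simp
  next
    assume "dmat n g *\<^sub>v (adj U *\<^sub>v v) = adj U *\<^sub>v v"
    then show "sd n U g *\<^sub>v v = v" using e1 vw unfolding w_def by simp
  qed
qed

lemma eigen_coords: assumes uU: "unitary n U" and e: "e \<in> carrier_vec n"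
  and He: "sd n U lam *\<^sub>v e = x \<cdot>\<^sub>v e" and j: "j < n"
  shows "lam j * (adj U *\<^sub>v e) $ j = x * (adj U *\<^sub>v e) $ j"
proof -
  have U: "U \<in> carrier_mat n n" using uU unfolding unitary_def by auto
  define w where "w = adj U *\<^sub>v e"
  have w: "w \<in> carrier_vec n" unfolding w_def by (rule mult_mat_vec_carrier[of _ n n]) (use U e in auto)
  have "adj U *\<^sub>v (sd n U lam *\<^sub>v e) = (adj U * sd n U lam) *\<^sub>v e"
    by (rule assoc_mult_mat_vec[symmetric, of _ n n _ n]) (use U e in auto)
  also have "\<dots> = (dmat n lam * adj U) *\<^sub>v e" unfolding sd_L[OF uU] ..
  also have "\<dots> = dmat n lam *\<^sub>v w" unfolding w_def
    by (rule assoc_mult_mat_vec[of _ n n _ n]) (use U e in auto)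
  finally have "dmat n lam *\<^sub>v w = adj U *\<^sub>v (x \<cdot>\<^sub>v e)" unfolding He by simp
  also have "\<dots> = x \<cdot>\<^sub>v w" unfolding w_def by (rule mult_mat_vec[of _ n n]) (use U e in auto)
  finally have "(dmat n lam *\<^sub>v w) $ j = (x \<cdot>\<^sub>v w) $ j" by simp
  moreover have "(x \<cdot>\<^sub>v w) $ j = x * w $ j" using w j by simp
  ultimately have "lam j * w $ j = x * w $ j" using dmat_vec_index[OF w j] by simp
  then show ?thesis unfolding w_def .
qed

lemma foldr_lincomb:
  assumes "\<And>j. j \<in> set js \<Longrightarrow> g j \<in> carrier_vec d"
  shows "foldr (+) (map2 (\<lambda>c x. c \<cdot>\<^sub>v x) (map f js) (map g js)) (0\<^sub>v d)
       = vec d (\<lambda>a. sum_list (map (\<lambda>j. f j * g j $ a) js))"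
  using assms
proof (induction js)
  case Nil
  then show ?case by (intro eq_vecI, auto)
next
  case (Cons j js)
  have gj: "g j \<in> carrier_vec d" using Cons by auto
  have IH: "foldr (+) (map2 (\<lambda>c x. c \<cdot>\<^sub>v x) (map f js) (map g js)) (0\<^sub>v d)
       = vec d (\<lambda>a. sum_list (map (\<lambda>j. f j * g j $ a) js))" using Cons by auto
  show ?case unfolding list.map zip_Cons_Cons list.map prod.case foldr.simps o_def IH
    using gj by (intro eq_vecI, auto)
qed

lemma unitary_col_nonzero: assumes uU: "unitary n U" and j: "j < n" shows "col U j \<noteq> 0\<^sub>v n"
proof
  assume z: "col U j = 0\<^sub>v n"
  have U: "U \<in> carrier_mat n n" and UU: "adj U * U = 1\<^sub>m n" using uU unfolding unitary_def by auto
  have "(\<Sum>l=0..<n. cnj (U $$ (l,j)) * U $$ (l,j)) = 1" using unitary_entries[OF U] UU j by auto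
  moreover have "U $$ (l,j) = 0" if "l < n" for l
    using arg_cong[OF z, of "\<lambda>v. v $ l"] that j U by simp
  ultimately show False by simp
qed

lemma cov_proj_sd:
  assumes uU: "unitary d U" and Hd: "H = sd d U (\<lambda>j. complex_of_real (lam j))"
  shows "cov_proj d H \<epsilon> c = sd d U (\<lambda>j. if lam j \<in> {c - \<epsilon> <..< c + \<epsilon>} then 1 else 0)"
proof -
  define I where "I = {c - \<epsilon> <..< c + \<epsilon>}"
  define chi where "chi = (\<lambda>j. if lam j \<in> I then 1 else (0::complex))"
  define P where "P = sd d U chi"
  define E where "E = {v. \<exists>x\<in>I. eigenvector H v (complex_of_real x)}"
  have U: "U \<in> carrier_mat d d" and UU': "U * adj U = 1\<^sub>m d" using uU unfolding unitary_def by auto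
  have Hc: "H \<in> carrier_mat d d" unfolding Hd using U by simp
  have P: "P \<in> carrier_mat d d" unfolding P_def using U by simp
  have hP: "hermitian d P" unfolding hermitian_def P_def adj_sd[OF U] using U
    by (auto intro!: sd_eqI simp: chi_def)
  have PP: "P * P = P" unfolding P_def sd_mult[OF uU] by (rule sd_eqI[OF U], simp add: chi_def)
  have fixc: "P *\<^sub>v v = v \<longleftrightarrow> (\<forall>j<d. chi j * (adj U *\<^sub>v v) $ j = (adj U *\<^sub>v v) $ j)"
    if v: "v \<in> carrier_vec d" for v
  proof -
    have w: "adj U *\<^sub>v v \<in> carrier_vec d" by (rule mult_mat_vec_carrier[of _ d d]) (use U v in auto)
    have dw: "dmat d chi *\<^sub>v (adj U *\<^sub>v v) \<in> carrier_vec d" by (rule mult_mat_vec_carrier[of _ d d]) (use w in auto)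
    have "P *\<^sub>v v = v \<longleftrightarrow> dmat d chi *\<^sub>v (adj U *\<^sub>v v) = adj U *\<^sub>v v"
      unfolding P_def by (rule sd_fix[OF uU v])
    also have "\<dots> \<longleftrightarrow> (\<forall>j<d. chi j * (adj U *\<^sub>v v) $ j = (adj U *\<^sub>v v) $ j)"
    proof
      assume "dmat d chi *\<^sub>v (adj U *\<^sub>v v) = adj U *\<^sub>v v"
      then show "\<forall>j<d. chi j * (adj U *\<^sub>v v) $ j = (adj U *\<^sub>v v) $ j"
        using dmat_vec_index[OF w] by (metis)
    next
      assume a: "\<forall>j<d. chi j * (adj U *\<^sub>v v) $ j = (adj U *\<^sub>v v) $ j"
      show "dmat d chi *\<^sub>v (adj U *\<^sub>v v) = adj U *\<^sub>v v"
      proof (rule eq_vecI)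
        fix i assume "i < dim_vec (adj U *\<^sub>v v)" then have i: "i < d" using U by simp
        show "(dmat d chi *\<^sub>v (adj U *\<^sub>v v)) $ i = (adj U *\<^sub>v v) $ i"
          using dmat_vec_index[OF w i, of chi] a i by (simp del: index_mult_mat_vec)
      qed (use U in simp)
    qed
    finally show ?thesis .
  qed
  have fixlin: "P *\<^sub>v (a \<cdot>\<^sub>v x + y) = a \<cdot>\<^sub>v x + y" if "x \<in> carrier_vec d" "y \<in> carrier_vec d"
    "P *\<^sub>v x = x" "P *\<^sub>v y = y" for a x y
  proof -
    have "P *\<^sub>v (a \<cdot>\<^sub>v x + y) = P *\<^sub>v (a \<cdot>\<^sub>v x) + P *\<^sub>v y"
      by (rule mult_add_distrib_mat_vec[OF P]) (use that in auto)
    also have "P *\<^sub>v (a \<cdot>\<^sub>v x) = a \<cdot>\<^sub>v (P *\<^sub>v x)" by (rule mult_mat_vec[OF P that(1)])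
    finally show ?thesis using that by simp
  qed
  have Efix: "P *\<^sub>v e = e \<and> e \<in> carrier_vec d" if eE: "e \<in> E" for e
  proof -
    obtain x where x: "x \<in> I" and ev: "eigenvector H e (complex_of_real x)" using eE unfolding E_def mem_Collect_eq by blast
    have e: "e \<in> carrier_vec d" and He: "H *\<^sub>v e = complex_of_real x \<cdot>\<^sub>v e"
      using ev Hc unfolding eigenvector_def by auto
    have "chi j * (adj U *\<^sub>v e) $ j = (adj U *\<^sub>v e) $ j" if j: "j < d" for j
    proof (cases "lam j \<in> I")
      case True then show ?thesis by (simp add: chi_def)
    next
      case False
      then have ne: "lam j \<noteq> x" using x by auto
      have "complex_of_real (lam j) * (adj U *\<^sub>v e) $ j = complex_of_real x * (adj U *\<^sub>v e) $ j"
        by (rule eigen_coords[OF uU e _ j]) (use He Hd in simp)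
      then have "(adj U *\<^sub>v e) $ j = 0" using ne by simp
      then show ?thesis by simp
    qed
    then show ?thesis using fixc[OF e] e by auto
  qed
  have spanfix: "P *\<^sub>v (foldr (+) (map2 (\<lambda>c x. c \<cdot>\<^sub>v x) cs xs) (0\<^sub>v d)) = foldr (+) (map2 (\<lambda>c x. c \<cdot>\<^sub>v x) cs xs) (0\<^sub>v d)
      \<and> foldr (+) (map2 (\<lambda>c x. c \<cdot>\<^sub>v x) cs xs) (0\<^sub>v d) \<in> carrier_vec d"
    if "set xs \<subseteq> E" for xs cs
    using that
  proof (induction xs arbitrary: cs)
    case Nil
    then show ?case using mult_mat_vec_zero[OF P] by simp
  next
    case (Cons x xs)
    then show ?case
    proof (cases cs)
      case Nil then show ?thesis using mult_mat_vec_zero[OF P] by simp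
    next
      case (Cons a cs')
      have IH: "P *\<^sub>v (foldr (+) (map2 (\<lambda>c x. c \<cdot>\<^sub>v x) cs' xs) (0\<^sub>v d)) = foldr (+) (map2 (\<lambda>c x. c \<cdot>\<^sub>v x) cs' xs) (0\<^sub>v d)
        \<and> foldr (+) (map2 (\<lambda>c x. c \<cdot>\<^sub>v x) cs' xs) (0\<^sub>v d) \<in> carrier_vec d"
        using Cons.IH Cons.prems by auto
      have x: "P *\<^sub>v x = x \<and> x \<in> carrier_vec d" using Efix Cons.prems by auto
      show ?thesis unfolding \<open>cs = a # cs'\<close> using fixlin IH x by auto
    qed
  qed
  have main: "P *\<^sub>v v = v \<longleftrightarrow> v \<in> vspan d E" if v: "v \<in> carrier_vec d" for v
  proof
    assume "v \<in> vspan d E"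
    then obtain xs cs where "set xs \<subseteq> E" and "v = foldr (+) (map2 (\<lambda>c x. c \<cdot>\<^sub>v x) cs xs) (0\<^sub>v d)"
      unfolding vspan_def by auto
    then show "P *\<^sub>v v = v" using spanfix by auto
  next
    assume fv: "P *\<^sub>v v = v"
    define w where "w = adj U *\<^sub>v v"
    have w: "w \<in> carrier_vec d" unfolding w_def by (rule mult_mat_vec_carrier[of _ d d]) (use U v in auto)
    have cw: "chi j * w $ j = w $ j" if "j < d" for j using fixc[OF v] fv that unfolding w_def by auto
    define js where "js = filter (\<lambda>j. lam j \<in> I) [0..<d]"
    define xs where "xs = map (col U) js"
    define cs where "cs = map (\<lambda>j. w $ j) js"
    have jsd: "j < d" if "j \<in> set js" for j using that unfolding js_def by auto
    have "set xs \<subseteq> E"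
    proof
      fix y assume "y \<in> set xs"
      then obtain j where j: "j \<in> set js" and y: "y = col U j" unfolding xs_def by auto
      have jd: "j < d" and lj: "lam j \<in> I" using j unfolding js_def by auto
      have "H *\<^sub>v col U j = complex_of_real (lam j) \<cdot>\<^sub>v col U j" unfolding Hd by (rule sd_mult_col[OF uU jd])
      then have "eigenvector H y (complex_of_real (lam j))"
        unfolding eigenvector_def y using unitary_col_nonzero[OF uU jd] U jd Hc by auto
      then show "y \<in> E" unfolding E_def using lj by auto
    qed
    moreover have "v = foldr (+) (map2 (\<lambda>c x. c \<cdot>\<^sub>v x) cs xs) (0\<^sub>v d)"
    proof -
      have "foldr (+) (map2 (\<lambda>c x. c \<cdot>\<^sub>v x) cs xs) (0\<^sub>v d) = vec d (\<lambda>a. sum_list (map (\<lambda>j. w $ j * col U j $ a) js))"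
        unfolding xs_def cs_def by (rule foldr_lincomb, use U jsd in auto)
      also have "\<dots> = v"
      proof (rule eq_vecI)
        fix a assume "a < dim_vec v" then have a: "a < d" using v by simp
        have "sum_list (map (\<lambda>j. w $ j * col U j $ a) js) = (\<Sum>j\<in>{j\<in>{0..<d}. lam j \<in> I}. w $ j * col U j $ a)"
          unfolding js_def by (subst sum_list_distinct_conv_sum_set, auto simp: set_filter)
        also have "\<dots> = (\<Sum>j=0..<d. if lam j \<in> I then w $ j * col U j $ a else 0)"
          by (rule sum.inter_filter, simp)
        also have "\<dots> = (\<Sum>j=0..<d. U $$ (a,j) * w $ j)"
        proof (rule sum.cong)
          fix j assume "j \<in> {0..<d}" then have j: "j < d" by simp
          show "(if lam j \<in> I then w $ j * col U j $ a else 0) = U $$ (a,j) * w $ j"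
            using cw[OF j] j a U by (auto simp: chi_def)
        qed simp
        also have "\<dots> = (U *\<^sub>v w) $ a" using U w a by (simp add: scalar_prod_def)
        also have "U *\<^sub>v w = v" unfolding w_def
          using assoc_mult_mat_vec[of U d d "adj U" d v] U v UU' by simp
        finally show "vec d (\<lambda>a. sum_list (map (\<lambda>j. w $ j * col U j $ a) js)) $ a = v $ a" using a by simp
      qed (use v in auto)
      finally show ?thesis by simp
    qed
    moreover have "length cs = length xs" unfolding cs_def xs_def by simp
    ultimately show "v \<in> vspan d E" unfolding vspan_def by blast
  qed
  have "cov_proj d H \<epsilon> c = P"
    unfolding cov_proj_def orth_proj_def E_def[symmetric] I_def[symmetric]
  proof (rule the_equality)
    show "hermitian d P \<and> P * P = P \<and> (\<forall>v\<in>carrier_vec d. P *\<^sub>v v = v \<longleftrightarrow> v \<in> vspan d E)"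
      using hP PP main by auto
    fix Q assume Q: "hermitian d Q \<and> Q * Q = Q \<and> (\<forall>v\<in>carrier_vec d. Q *\<^sub>v v = v \<longleftrightarrow> v \<in> vspan d E)"
    show "Q = P" by (rule orth_proj_unique[of d Q P], insert Q hP PP main, auto)
  qed
  then show ?thesis unfolding P_def chi_def I_def .
qed

lemma exp_key: fixes u :: real assumes "u \<ge> 0"
  shows "exp u * (1 - u) \<le> exp (- u) * (1 + u)"
proof -
  define f where "f = (\<lambda>t::real. exp (- t) * (1 + t) - exp t * (1 - t))"
  have "f 0 \<le> f u"
  proof (rule DERIV_nonneg_imp_nondecreasing[OF assms])
    fix x :: real assume x: "0 \<le> x" "x \<le> u"
    have "DERIV f x :> x * (exp x - exp (- x))"
      unfolding f_def by (rule derivative_eq_intros refl | simp add: algebra_simps)+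
    moreover have "x * (exp x - exp (- x)) \<ge> 0" using x by (intro mult_nonneg_nonneg, auto)
    ultimately show "\<exists>y. DERIV f x :> y \<and> y \<ge> 0" by blast
  qed
  then show ?thesis unfolding f_def by simp
qed

lemma tanh_le_sqrt: fixes \<delta> :: real assumes "\<delta> \<ge> 0"
  shows "(exp (2 * \<delta>) - 1) / (exp (2 * \<delta>) + 1) \<le> sqrt \<delta>"
proof (cases "\<delta> \<ge> 1")
  case True
  have "(exp (2 * \<delta>) - 1) / (exp (2 * \<delta>) + 1) \<le> 1"
    by (simp add: add_pos_nonneg divide_le_eq_1)
  also have "1 \<le> sqrt \<delta>" using True by simp
  finally show ?thesis .
next
  case False
  have "exp \<delta> * (1 - \<delta>) \<le> exp (- \<delta>) * (1 + \<delta>)" by (rule exp_key[OF assms])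
  then have "exp \<delta> * (exp \<delta> * (1 - \<delta>)) \<le> exp \<delta> * (exp (- \<delta>) * (1 + \<delta>))"
    by (intro mult_left_mono, auto)
  then have "exp (2 * \<delta>) * (1 - \<delta>) \<le> 1 + \<delta>"
    by (simp add: mult.assoc[symmetric] exp_add[symmetric] exp_minus_inverse)
  then have "exp (2 * \<delta>) - 1 \<le> \<delta> * (exp (2 * \<delta>) + 1)" by (simp add: algebra_simps)
  then have "(exp (2 * \<delta>) - 1) / (exp (2 * \<delta>) + 1) \<le> \<delta>"
    by (simp add: divide_le_eq add_pos_nonneg)
  also have "\<delta> \<le> sqrt \<delta>"
  proof -
    have s: "sqrt \<delta> \<le> 1" using False by simp
    have "sqrt \<delta> * sqrt \<delta> \<le> sqrt \<delta> * 1" by (rule mult_left_mono[OF s], simp add: assms)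
    then show ?thesis using assms by simp
  qed
  finally show ?thesis .
qed

lemma tv_ratio:
  fixes p q :: "nat \<Rightarrow> real"
  assumes R: "R \<ge> 1" and p0: "\<And>j. j < n \<Longrightarrow> p j \<ge> 0"
    and qp: "\<And>j. j < n \<Longrightarrow> q j \<le> R * p j" and pq: "\<And>j. j < n \<Longrightarrow> p j \<le> R * q j"
    and sp: "(\<Sum>j<n. p j) = 1" and sq: "(\<Sum>j<n. q j) = 1"
  shows "(\<Sum>j<n. \<bar>q j - p j\<bar>) \<le> 2 * ((R - 1) / (R + 1))"
proof -
  define S where "S = {j. j < n \<and> q j > p j}"
  define T where "T = {j. j < n \<and> \<not> q j > p j}"
  have fS: "finite S" and fT: "finite T" unfolding S_def T_def by auto
  have un: "{..<n} = S \<union> T" and di: "S \<inter> T = {}" unfolding S_def T_def by auto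
  define X where "X = (\<Sum>j\<in>S. q j - p j)"
  define Y where "Y = (\<Sum>j\<in>S. p j)"
  have split: "\<And>f. (\<Sum>j<n. f j) = (\<Sum>j\<in>S. f j) + (\<Sum>j\<in>T. f j)"
    unfolding un by (rule sum.union_disjoint[OF fS fT di])
  have "(\<Sum>j<n. q j - p j) = 0" using sp sq by (simp add: sum_subtractf)
  then have XT: "(\<Sum>j\<in>T. p j - q j) = X" unfolding split X_def
    by (simp add: sum_subtractf algebra_simps)
  have abs: "(\<Sum>j<n. \<bar>q j - p j\<bar>) = 2 * X"
  proof -
    have "(\<Sum>j<n. \<bar>q j - p j\<bar>) = (\<Sum>j\<in>S. q j - p j) + (\<Sum>j\<in>T. p j - q j)"
      unfolding split by (intro arg_cong2[where f="(+)"] sum.cong, auto simp: S_def T_def)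
    then show ?thesis using XT unfolding X_def by simp
  qed
  have X1: "X \<le> (R - 1) * Y" unfolding X_def Y_def sum_distrib_left
    by (rule sum_mono, insert qp, auto simp: S_def algebra_simps)
  have "R * X = (\<Sum>j\<in>T. R * p j - R * q j)" unfolding XT[symmetric] sum_distrib_left by (simp add: algebra_simps)
  also have "\<dots> \<le> (\<Sum>j\<in>T. (R - 1) * p j)" by (rule sum_mono, insert pq, auto simp: T_def algebra_simps)
  also have "\<dots> = (R - 1) * (\<Sum>j\<in>T. p j)" by (simp add: sum_distrib_left)
  also have "(\<Sum>j\<in>T. p j) = 1 - Y" using sp unfolding split Y_def by simp
  finally have X2: "R * X \<le> (R - 1) * (1 - Y)" .
  have "X * (R + 1) \<le> R - 1" using X1 X2 by (simp add: algebra_simps)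
  then have "X \<le> (R - 1) / (R + 1)" using R by (simp add: le_divide_eq)
  then show ?thesis unfolding abs by linarith
qed

lemma tv_exp_bound:
  fixes a b :: "nat \<Rightarrow> real"
  assumes a0: "\<And>j. j < n \<Longrightarrow> a j > 0" and b0: "\<And>j. j < n \<Longrightarrow> b j > 0" and n: "n > 0" and \<delta>: "\<delta> \<ge> 0"
    and ba: "\<And>j. j < n \<Longrightarrow> b j \<le> exp \<delta> * a j" and ab: "\<And>j. j < n \<Longrightarrow> a j \<le> exp \<delta> * b j"
  shows "(\<Sum>j<n. \<bar>b j / (\<Sum>i<n. b i) - a j / (\<Sum>i<n. a i)\<bar>) \<le> sqrt (4 * \<delta>)"
proof -
  define A where "A = (\<Sum>i<n. a i)"
  define B where "B = (\<Sum>i<n. b i)"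
  have A: "A > 0" unfolding A_def using a0 n by (intro sum_pos, auto)
  have B: "B > 0" unfolding B_def using b0 n by (intro sum_pos, auto)
  have BA: "B \<le> exp \<delta> * A" unfolding A_def B_def sum_distrib_left by (rule sum_mono, simp add: ba)
  have AB: "A \<le> exp \<delta> * B" unfolding A_def B_def sum_distrib_left by (rule sum_mono, simp add: ab)
  define R where "R = exp (2 * \<delta>)"
  have R: "R \<ge> 1" unfolding R_def using \<delta> by simp
  have Rsq: "R = exp \<delta> * exp \<delta>" unfolding R_def by (simp add: exp_add[symmetric])
  have "(\<Sum>j<n. \<bar>b j / B - a j / A\<bar>) \<le> 2 * ((R - 1) / (R + 1))"
  proof (rule tv_ratio[OF R])
    show "a j / A \<ge> 0" if "j < n" for j using a0[OF that] A by simp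
    show "b j / B \<le> R * (a j / A)" if j: "j < n" for j
    proof -
      have "b j * A \<le> (exp \<delta> * a j) * (exp \<delta> * B)"
        by (rule mult_mono, use ba[OF j] AB A a0[OF j] in auto)
      then show ?thesis using A B unfolding Rsq by (simp add: field_simps)
    qed
    show "a j / A \<le> R * (b j / B)" if j: "j < n" for j
    proof -
      have "a j * B \<le> (exp \<delta> * b j) * (exp \<delta> * A)"
        by (rule mult_mono, use ab[OF j] BA B b0[OF j] in auto)
      then show ?thesis using A B unfolding Rsq by (simp add: field_simps)
    qed
    show "(\<Sum>j<n. a j / A) = 1" using A unfolding A_def by (simp add: sum_divide_distrib[symmetric])
    show "(\<Sum>j<n. b j / B) = 1" using B unfolding B_def by (simp add: sum_divide_distrib[symmetric])
  qed
  also have "\<dots> \<le> 2 * sqrt \<delta>" using tanh_le_sqrt[OF \<delta>] unfolding R_def by linarith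
  also have "\<dots> = sqrt (4 * \<delta>)" by (simp add: real_sqrt_mult)
  finally show ?thesis unfolding A_def B_def .
qed

lemma has_sum_finsum:
  fixes f :: "'j \<Rightarrow> 'a \<Rightarrow> 'b::topological_comm_monoid_add"
  assumes "finite J" "\<And>j. j \<in> J \<Longrightarrow> (f j has_sum s j) A"
  shows "((\<lambda>k. \<Sum>j\<in>J. f j k) has_sum (\<Sum>j\<in>J. s j)) A"
  using assms
proof (induction J rule: finite_induct)
  case empty
  then show ?case by simp
next
  case (insert x F)
  have "((\<lambda>k. f x k + (\<Sum>j\<in>F. f j k)) has_sum (s x + (\<Sum>j\<in>F. s j))) A"
    by (rule has_sum_add) (use insert in auto)
  then show ?case using insert by simp
qed

definition qf :: "nat \<Rightarrow> complex mat \<Rightarrow> complex mat \<Rightarrow> nat \<Rightarrow> complex" where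
  "qf d U F l = (\<Sum>a=0..<d. \<Sum>b=0..<d. F $$ (a,b) * U $$ (b,l) * cnj (U $$ (a,l)))"

lemma tr_F_sd: assumes F: "F \<in> carrier_mat d d" and U: "U \<in> carrier_mat d d"
  shows "tr (F * sd d U f) = (\<Sum>l=0..<d. f l * qf d U F l)"
proof -
  have "tr (F * sd d U f) = (\<Sum>a=0..<d. \<Sum>b=0..<d. F $$ (a,b) * sd d U f $$ (b,a))"
    unfolding tr_def using F U by (auto simp: scalar_prod_def lessThan_atLeast0 intro!: sum.cong)
  also have "\<dots> = (\<Sum>a=0..<d. \<Sum>b=0..<d. \<Sum>l=0..<d. f l * (F $$ (a,b) * U $$ (b,l) * cnj (U $$ (a,l))))"
  proof (rule sum.cong[OF refl], rule sum.cong[OF refl])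
    fix a b assume "a \<in> {0..<d}" "b \<in> {0..<d}"
    then have a: "a < d" and b: "b < d" by auto
    show "F $$ (a,b) * sd d U f $$ (b,a) = (\<Sum>l=0..<d. f l * (F $$ (a,b) * U $$ (b,l) * cnj (U $$ (a,l))))"
      unfolding sd_idx[OF U b a] sum_distrib_left by (rule sum.cong) (simp_all add: algebra_simps)
  qed
  also have "\<dots> = (\<Sum>a=0..<d. \<Sum>l=0..<d. \<Sum>b=0..<d. f l * (F $$ (a,b) * U $$ (b,l) * cnj (U $$ (a,l))))"
    by (rule sum.cong[OF refl], rule sum.swap)
  also have "\<dots> = (\<Sum>l=0..<d. \<Sum>a=0..<d. \<Sum>b=0..<d. f l * (F $$ (a,b) * U $$ (b,l) * cnj (U $$ (a,l))))"
    by (rule sum.swap)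
  also have "\<dots> = (\<Sum>l=0..<d. f l * qf d U F l)"
    unfolding qf_def sum_distrib_left ..
  finally show ?thesis .
qed

lemma qf_quad: assumes F: "F \<in> carrier_mat d d" and U: "U \<in> carrier_mat d d" and l: "l < d"
  shows "qf d U F l = (F *\<^sub>v col U l) \<bullet>c col U l"
proof -
  have "(F *\<^sub>v col U l) \<bullet>c col U l = (\<Sum>a=0..<d. (\<Sum>b=0..<d. F $$ (a,b) * U $$ (b,l)) * cnj (U $$ (a,l)))"
    using F U l by (auto simp: scalar_prod_def intro!: sum.cong)
  then show ?thesis unfolding qf_def by (simp add: sum_distrib_right)
qed

lemma qf_real: assumes F: "hermitian d F" and U: "U \<in> carrier_mat d d"
  shows "cnj (qf d U F l) = qf d U F l"
proof -
  have Fc: "F \<in> carrier_mat d d" and aF: "adj F = F" using F unfolding hermitian_def by auto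
  have Fs: "cnj (F $$ (a,b)) = F $$ (b,a)" if "a < d" "b < d" for a b
  proof -
    have "F $$ (b,a) = adj F $$ (b,a)" using aF by simp
    also have "\<dots> = cnj (F $$ (a,b))" using Fc that by simp
    finally show ?thesis by simp
  qed
  have "cnj (qf d U F l) = (\<Sum>a=0..<d. \<Sum>b=0..<d. F $$ (b,a) * U $$ (a,l) * cnj (U $$ (b,l)))"
    unfolding qf_def cnj_sum by (intro sum.cong refl, simp add: Fs mult.commute mult.left_commute)
  also have "\<dots> = qf d U F l" unfolding qf_def by (rule sum.swap)
  finally show ?thesis .
qed

lemma qf_nonneg: assumes F: "psd d F" and U: "U \<in> carrier_mat d d" and l: "l < d"
  shows "qf d U F l = complex_of_real (Re (qf d U F l))" "Re (qf d U F l) \<ge> 0"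
proof -
  have hF: "hermitian d F" and Fc: "F \<in> carrier_mat d d" using F unfolding psd_def hermitian_def by auto
  have "cnj (qf d U F l) = qf d U F l" by (rule qf_real[OF hF U])
  then have "Im (qf d U F l) = 0" by (metis cnj.simps(2) neg_equal_zero)
  then show "qf d U F l = complex_of_real (Re (qf d U F l))" by (simp add: complex_eq_iff)
  show "Re (qf d U F l) \<ge> 0" unfolding qf_quad[OF Fc U l] using F U l unfolding psd_def by auto
qed

lemma qf_has_sum: assumes P: "povm d I F" and uU: "unitary d U" and l: "l < d"
  shows "((\<lambda>k. qf d U (F k) l) has_sum 1) I"
proof -
  have U: "U \<in> carrier_mat d d" and UU: "adj U * U = 1\<^sub>m d" using uU unfolding unitary_def by auto
  have ent: "((\<lambda>k. F k $$ (a,b)) has_sum (1\<^sub>m d $$ (a,b))) I" if "a < d" "b < d" for a b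
    using P that unfolding povm_def by auto
  have "((\<lambda>k. qf d U (F k) l) has_sum (\<Sum>a=0..<d. \<Sum>b=0..<d. 1\<^sub>m d $$ (a,b) * U $$ (b,l) * cnj (U $$ (a,l)))) I"
    unfolding qf_def
    by (intro has_sum_finsum finite_atLeastLessThan has_sum_cmult_left ent, auto)
  also have "(\<Sum>a=0..<d. \<Sum>b=0..<d. 1\<^sub>m d $$ (a,b) * U $$ (b,l) * cnj (U $$ (a,l))) = (\<Sum>a=0..<d. cnj (U $$ (a,l)) * U $$ (a,l))"
  proof (rule sum.cong[OF refl])
    fix a assume "a \<in> {0..<d}" then have a: "a < d" by simp
    have "(\<Sum>b=0..<d. 1\<^sub>m d $$ (a,b) * U $$ (b,l) * cnj (U $$ (a,l))) = (\<Sum>b=0..<d. if b = a then U $$ (a,l) * cnj (U $$ (a,l)) else 0)"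
      by (rule sum.cong[OF refl], use a in auto)
    also have "\<dots> = cnj (U $$ (a,l)) * U $$ (a,l)" using a by simp
    finally show "(\<Sum>b=0..<d. 1\<^sub>m d $$ (a,b) * U $$ (b,l) * cnj (U $$ (a,l))) = cnj (U $$ (a,l)) * U $$ (a,l)" .
  qed
  also have "\<dots> = 1" using unitary_entries[OF U] UU l by auto
  finally show ?thesis .
qed

lemma povm_bound:
  assumes P: "povm d I F" and uU: "unitary d U"
  shows "(\<lambda>k. cmod (tr (F k * sd d U (\<lambda>l. complex_of_real (y l))) - tr (F k * sd d U (\<lambda>l. complex_of_real (z l))))) summable_on I
    \<and> (\<Sum>\<^sub>\<infinity>k\<in>I. cmod (tr (F k * sd d U (\<lambda>l. complex_of_real (y l))) - tr (F k * sd d U (\<lambda>l. complex_of_real (z l))))) \<le> (\<Sum>l=0..<d. \<bar>y l - z l\<bar>)"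
proof -
  have U: "U \<in> carrier_mat d d" using uU unfolding unitary_def by auto
  define g where "g = (\<lambda>k. cmod (tr (F k * sd d U (\<lambda>l. complex_of_real (y l))) - tr (F k * sd d U (\<lambda>l. complex_of_real (z l)))))"
  define h where "h = (\<lambda>k. \<Sum>l=0..<d. \<bar>y l - z l\<bar> * Re (qf d U (F k) l))"
  have hs: "(h has_sum (\<Sum>l=0..<d. \<bar>y l - z l\<bar> * 1)) I"
    unfolding h_def
    by (intro has_sum_finsum finite_atLeastLessThan has_sum_cmult_right has_sum_Re[where a=1, simplified] qf_has_sum[OF P uU], auto)
  have psdF: "psd d (F k)" if "k \<in> I" for k using P that unfolding povm_def by auto
  have g_le: "g k \<le> h k" if k: "k \<in> I" for k
  proof -
    have Fc: "F k \<in> carrier_mat d d" using psdF[OF k] unfolding psd_def hermitian_def by auto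
    have "g k = cmod (\<Sum>l=0..<d. complex_of_real (y l - z l) * qf d U (F k) l)"
      unfolding g_def tr_F_sd[OF Fc U] sum_subtractf[symmetric] by (simp add: algebra_simps)
    also have "\<dots> \<le> (\<Sum>l=0..<d. cmod (complex_of_real (y l - z l) * qf d U (F k) l))" by (rule norm_sum)
    also have "\<dots> = h k" unfolding h_def
    proof (rule sum.cong[OF refl])
      fix l assume "l \<in> {0..<d}" then have l: "l < d" by simp
      have e: "qf d U (F k) l = complex_of_real (Re (qf d U (F k) l))" and n: "Re (qf d U (F k) l) \<ge> 0"
        using qf_nonneg[OF psdF[OF k] U l] by auto
      show "cmod (complex_of_real (y l - z l) * qf d U (F k) l) = \<bar>y l - z l\<bar> * Re (qf d U (F k) l)"
        by (subst e, simp only: of_real_mult[symmetric] norm_of_real, simp add: abs_mult n)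
    qed
    finally show ?thesis .
  qed
  have g0: "g k \<ge> 0" for k unfolding g_def by simp
  have sg: "g summable_on I"
    by (rule summable_on_comparison_test[OF has_sum_imp_summable[OF hs] g_le g0])
  have "infsum g I \<le> infsum h I"
    by (rule infsum_mono[OF sg has_sum_imp_summable[OF hs] g_le])
  also have "infsum h I = (\<Sum>l=0..<d. \<bar>y l - z l\<bar>)" using hs by (simp add: infsumI)
  finally show ?thesis using sg unfolding g_def by simp
qed

theorem theorem3p3:
  fixes H :: "complex mat" and d d' :: nat and \<beta> \<epsilon> :: real and e :: "nat \<Rightarrow> real"
  assumes "hermitian d H" and "\<beta> > 0" and "\<epsilon> > 0"
    and "spectral_covering \<epsilon> H d' e"
  shows "trace_norm (approx_state d H \<beta> \<epsilon> d' e - gibbs \<beta> H) \<le> sqrt (4 * \<epsilon> * \<beta>)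
       \<and> (\<forall>(I :: 'k set) F. povm d I F \<longrightarrow>
            (let p = (\<lambda>k. tr (F k * gibbs \<beta> H));
                 pt = (\<lambda>k. tr (F k * approx_state d H \<beta> \<epsilon> d' e)) in
              (\<lambda>k. cmod (pt k - p k)) summable_on I \<and>
              (\<Sum>\<^sub>\<infinity>k\<in>I. cmod (pt k - p k)) \<le> sqrt (4 * \<epsilon> * \<beta>)))"
proof -
  note hH = assms(1) and bpos = assms(2) and epos = assms(3) and cov = assms(4)
  obtain U lam where uU: "unitary d U" and Hd: "H = U * dmat d (\<lambda>j. complex_of_real (lam j)) * adj U"
    using spectral[OF hH] by blast
  have U: "U \<in> carrier_mat d d" using uU unfolding unitary_def by auto
  have Hsd: "H = sd d U (\<lambda>j. complex_of_real (lam j))" unfolding sd_def by (rule Hd)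
  have Hc: "H \<in> carrier_mat d d" using hH unfolding hermitian_def by auto
  define Iv where "Iv = (\<lambda>i. {e i - \<epsilon> <..< e i + \<epsilon>})"
  have inI: "\<exists>i<d'. lam j \<in> Iv i" if j: "j < d" for j
  proof -
    have "H *\<^sub>v col U j = complex_of_real (lam j) \<cdot>\<^sub>v col U j" unfolding Hsd by (rule sd_mult_col[OF uU j])
    then have "eigenvector H (col U j) (complex_of_real (lam j))"
      unfolding eigenvector_def using unitary_col_nonzero[OF uU j] U j Hc by auto
    then have "complex_of_real (lam j) \<in> spectrum H" unfolding spectrum_def eigenvalue_def by auto
    then obtain i where "i < d'" "complex_of_real (lam j) \<in> complex_of_real ` Iv i"
      using cov unfolding spectral_covering_def Iv_def by blast
    then show ?thesis by auto
  qed
  have disj: "i1 = i2" if "i1 < d'" "i2 < d'" "x \<in> Iv i1" "x \<in> Iv i2" for i1 i2 x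
    using cov that unfolding spectral_covering_def Iv_def by blast
  define \<iota> where "\<iota> = (\<lambda>j. SOME i. i < d' \<and> lam j \<in> Iv i)"
  have \<iota>: "\<iota> j < d' \<and> lam j \<in> Iv (\<iota> j)" if "j < d" for j
    unfolding \<iota>_def by (rule someI_ex, use inI[OF that] in auto)
  have sum\<iota>: "(\<Sum>i<d'. (if lam j \<in> Iv i then c i else 0)) = c (\<iota> j)" if j: "j < d" for j and c :: "nat \<Rightarrow> complex"
  proof -
    have "(\<Sum>i<d'. (if lam j \<in> Iv i then c i else 0)) = (\<Sum>i<d'. (if i = \<iota> j then c i else 0))"
      by (rule sum.cong[OF refl], use \<iota>[OF j] disj in auto)
    also have "\<dots> = c (\<iota> j)" using \<iota>[OF j] by simp
    finally show ?thesis .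
  qed
  define chi where "chi = (\<lambda>i j. if lam j \<in> Iv i then 1 else (0::complex))"
  have P: "cov_proj d H \<epsilon> (e i) = sd d U (chi i)" for i
    unfolding chi_def Iv_def by (rule cov_proj_sd[OF uU Hsd])
  define a where "a = (\<lambda>j. exp (- \<beta> * lam j))"
  define b where "b = (\<lambda>j. exp (- \<beta> * e (\<iota> j)))"
  define A where "A = (\<Sum>j=0..<d. a j)"
  define B where "B = (\<Sum>j=0..<d. b j)"
  define c where "c = (\<lambda>i. complex_of_real (exp (- \<beta> * e i)))"
  have bc: "complex_of_real (b j) = c (\<iota> j)" for j unfolding b_def c_def ..
  have Zt: "approx_partition_fn d H \<beta> \<epsilon> d' e = complex_of_real B"
  proof -
    have "approx_partition_fn d H \<beta> \<epsilon> d' e = (\<Sum>i<d'. (\<Sum>l=0..<d. chi i l) * c i)"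
      unfolding approx_partition_fn_def P tr_sd[OF uU] c_def ..
    also have "\<dots> = (\<Sum>i<d'. \<Sum>l=0..<d. chi i l * c i)" by (simp add: sum_distrib_right)
    also have "\<dots> = (\<Sum>l=0..<d. \<Sum>i<d'. chi i l * c i)" by (rule sum.swap)
    also have "\<dots> = (\<Sum>l=0..<d. complex_of_real (b l))"
    proof (rule sum.cong[OF refl])
      fix l assume "l \<in> {0..<d}" then have l: "l < d" by simp
      have "(\<Sum>i<d'. chi i l * c i) = (\<Sum>i<d'. (if lam l \<in> Iv i then c i else 0))"
        unfolding chi_def by (rule sum.cong, auto)
      then show "(\<Sum>i<d'. chi i l * c i) = complex_of_real (b l)" using sum\<iota>[OF l] bc by simp
    qed
    finally show ?thesis unfolding B_def by simp
  qed
  have Msum: "msum d (\<lambda>i. complex_of_real (exp (- \<beta> * e i)) \<cdot>\<^sub>m cov_proj d H \<epsilon> (e i)) {..<d'}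
     = sd d U (\<lambda>l. complex_of_real (b l))"
  proof (rule eq_matI)
    fix x y assume "x < dim_row (sd d U (\<lambda>l. complex_of_real (b l)))" "y < dim_col (sd d U (\<lambda>l. complex_of_real (b l)))"
    then have x: "x < d" and y: "y < d" using U by auto
    have "msum d (\<lambda>i. complex_of_real (exp (- \<beta> * e i)) \<cdot>\<^sub>m cov_proj d H \<epsilon> (e i)) {..<d'} $$ (x,y)
       = (\<Sum>i<d'. sd d U (\<lambda>l. c i * chi i l) $$ (x,y))"
      unfolding msum_def P sd_smult[OF U] using x y by (simp add: c_def)
    also have "\<dots> = (\<Sum>i<d'. \<Sum>l=0..<d. U $$ (x,l) * (c i * chi i l) * cnj (U $$ (y,l)))"
      by (rule sum.cong[OF refl], rule sd_idx[OF U x y])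
    also have "\<dots> = (\<Sum>l=0..<d. \<Sum>i<d'. U $$ (x,l) * (c i * chi i l) * cnj (U $$ (y,l)))" by (rule sum.swap)
    also have "\<dots> = (\<Sum>l=0..<d. U $$ (x,l) * complex_of_real (b l) * cnj (U $$ (y,l)))"
    proof (rule sum.cong[OF refl])
      fix l assume "l \<in> {0..<d}" then have l: "l < d" by simp
      have "(\<Sum>i<d'. U $$ (x,l) * (c i * chi i l) * cnj (U $$ (y,l))) = U $$ (x,l) * (\<Sum>i<d'. c i * chi i l) * cnj (U $$ (y,l))"
        by (simp add: sum_distrib_left sum_distrib_right)
      also have "(\<Sum>i<d'. c i * chi i l) = (\<Sum>i<d'. (if lam l \<in> Iv i then c i else 0))"
        unfolding chi_def by (rule sum.cong, auto)
      also have "\<dots> = complex_of_real (b l)" using sum\<iota>[OF l] bc by simp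
      finally show "(\<Sum>i<d'. U $$ (x,l) * (c i * chi i l) * cnj (U $$ (y,l))) = U $$ (x,l) * complex_of_real (b l) * cnj (U $$ (y,l))" .
    qed
    also have "\<dots> = sd d U (\<lambda>l. complex_of_real (b l)) $$ (x,y)" using sd_idx[OF U x y] by simp
    finally show "msum d (\<lambda>i. complex_of_real (exp (- \<beta> * e i)) \<cdot>\<^sub>m cov_proj d H \<epsilon> (e i)) {..<d'} $$ (x,y)
       = sd d U (\<lambda>l. complex_of_real (b l)) $$ (x,y)" .
  qed (use U in \<open>auto simp: msum_def\<close>)
  have rt: "approx_state d H \<beta> \<epsilon> d' e = sd d U (\<lambda>l. complex_of_real (b l / B))"
    unfolding approx_state_def Zt Msum sd_smult[OF U] by (rule sd_eqI[OF U], simp)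
  have E: "mat_exp (complex_of_real (- \<beta>) \<cdot>\<^sub>m H) = sd d U (\<lambda>l. complex_of_real (a l))"
    unfolding Hsd sd_smult[OF U] mat_exp_sd[OF uU] a_def
    by (rule sd_eqI[OF U], simp flip: of_real_mult exp_of_real)
  have Z: "partition_fn \<beta> H = complex_of_real A"
    unfolding partition_fn_def E tr_sd[OF uU] A_def by simp
  have rho: "gibbs \<beta> H = sd d U (\<lambda>l. complex_of_real (a l / A))"
    unfolding gibbs_def Z E sd_smult[OF U] by (rule sd_eqI[OF U], simp)
  have bound: "(\<Sum>l=0..<d. \<bar>b l / B - a l / A\<bar>) \<le> sqrt (4 * \<epsilon> * \<beta>)"
  proof (cases "d = 0")
    case True
    then show ?thesis using bpos epos by simp
  next
    case False
    have "(\<Sum>j<d. \<bar>b j / (\<Sum>i<d. b i) - a j / (\<Sum>i<d. a i)\<bar>) \<le> sqrt (4 * (\<beta> * \<epsilon>))"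
    proof (rule tv_exp_bound)
      show "0 < d" using False by simp
      show "0 \<le> \<beta> * \<epsilon>" using bpos epos by simp
      show "a j > 0" for j unfolding a_def by simp
      show "b j > 0" for j unfolding b_def by simp
      fix j assume j: "j < d"
      have lj: "lam j \<in> Iv (\<iota> j)" using \<iota>[OF j] by simp
      then have l1: "lam j - e (\<iota> j) \<le> \<epsilon>" and l2: "e (\<iota> j) - lam j \<le> \<epsilon>" unfolding Iv_def by auto
      have "- \<beta> * e (\<iota> j) \<le> \<beta> * \<epsilon> + - \<beta> * lam j"
        using mult_left_mono[OF l1, of \<beta>] bpos by (simp add: algebra_simps)
      then show "b j \<le> exp (\<beta> * \<epsilon>) * a j" unfolding a_def b_def by (simp add: exp_add[symmetric])
      have "- \<beta> * lam j \<le> \<beta> * \<epsilon> + - \<beta> * e (\<iota> j)"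
        using mult_left_mono[OF l2, of \<beta>] bpos by (simp add: algebra_simps)
      then show "a j \<le> exp (\<beta> * \<epsilon>) * b j" unfolding a_def b_def by (simp add: exp_add[symmetric])
    qed
    then have h: "(\<Sum>j=0..<d. \<bar>b j / (\<Sum>i=0..<d. b i) - a j / (\<Sum>i=0..<d. a i)\<bar>) \<le> sqrt (4 * (\<beta> * \<epsilon>))"
      by (simp only: lessThan_atLeast0)
    have eq: "4 * (\<beta> * \<epsilon>) = 4 * \<epsilon> * \<beta>" by simp
    show ?thesis unfolding A_def B_def using h unfolding eq .
  qed
  have diff: "approx_state d H \<beta> \<epsilon> d' e - gibbs \<beta> H = sd d U (\<lambda>l. complex_of_real (b l / B - a l / A))"
    unfolding rt rho sd_minus[OF U] by (rule sd_eqI[OF U], simp)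
  have part1: "trace_norm (approx_state d H \<beta> \<epsilon> d' e - gibbs \<beta> H) \<le> sqrt (4 * \<epsilon> * \<beta>)"
    unfolding diff trace_norm_sd[OF uU] by (rule bound)
  have part2: "(\<lambda>k. cmod (tr (F k * approx_state d H \<beta> \<epsilon> d' e) - tr (F k * gibbs \<beta> H))) summable_on I \<and>
              (\<Sum>\<^sub>\<infinity>k\<in>I. cmod (tr (F k * approx_state d H \<beta> \<epsilon> d' e) - tr (F k * gibbs \<beta> H))) \<le> sqrt (4 * \<epsilon> * \<beta>)"
    if PI: "povm d I F" for I :: "'k set" and F
    using povm_bound[OF PI uU, of "\<lambda>l. b l / B" "\<lambda>l. a l / A"] bound unfolding rt rho by auto
  show ?thesis using part1 part2 unfolding Let_def by blast
qed

end
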